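(* Let $\mathcal S=\mathbb R^d$ with the Euclidean metric, let the target locations be pairwise distinct and the training locations pairwise distinct, and let $(S_n)_{n\ge1}$ satisfy infill asymptotics with respect to $(S^*_m)_{m=1}^M$. Assume (A2)–(A6), and let $k_N$ be the adaptive number-of-neighbors sequence for some positive $(a_t)$ with $a_t\to0$. Then $k_N\,\Psi^{N,k_N}\Lambda^N(\Psi^{N,k_N})^\top\to\Lambda^\star$ in probability, where $\Lambda^\star\in\mathbb R^{M\times M}$ is diagonal with $\Lambda^\star_{mm}=\mathrm{Var}(Y^*_m)=\rho^2(S^*_m)$.
   Context: Fixed targets $S^*_m$; deterministic training locations $(S_n)$ with real responses $Y_n$; target responses $Y^*_m$. (A2) $\exists f:\mathcal S\to\mathbb R$ with $\mathbb E[Y_n]=f(S_n)$, $\mathbb E[Y^*_m]=f(S^*_m)$, all responses mutually independent. (A3) $f$ is $L$-Lipschitz. (A4) $\exists\rho^2:\mathcal S\to[0,B_Y]$ with $\mathrm{Var}(Y_n)=\rho^2(S_n)$, $\mathrm{Var}(Y^*_m)=\rho^2(S^*_m)$. (A5) $\rho^2$ is continuous. (A6) $\exists\alpha_4:\mathcal S\to[0,C]$ with $\mathbb E[(Y_n-f(S_n))^4]=\alpha_4(S_n)$, $\mathbb E[(Y^*_m-f(S^*_m))^4]=\alpha_4(S^*_m)$. Infill asymptotics: for every $m$ and open $U\ni S^*_m$, infinitely many $n$ have $S_n\in U$. $\Psi^{N,k}\in\mathbb R^{M\times N}$: $\Psi^{N,k}_{mn}=1/k$ if $S_n$ among the $k$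 points of $\{S_1,\dots,S_N\}$ closest to $S^*_m$, else $0$ (ties broken uniformly at random). Adaptive $k_N$: $R_{N,t}=\max_m\max\{d(S^*_m,S_n):n\le N,\ S_n\text{ among the } t \text{ nearest neighbors of } S^*_m\}$; $k_1=1$, $k_{N+1}=k_N+1$ if $R_{N+1,k_N+1}\le a_{k_N}$, else $k_N$. $\zeta^N(n)$ is the index of the nearest neighbor of $S_n$ in $\{S_{n'}:n'\le N, n'\ne n\}$; $\Lambda^N\in\mathbb R^{N\times N}$ is diagonal with $\Lambda^N_{nn}=\frac12(Y_n-Y_{\zeta^N(n)})^2$. *)

theory Defs
  imports "HOL-Probability.Probability"
begin

text \<open>Admissible k-nearest-neighbour index sets of the target Sstar m among S 1..S N
  (all ways of breaking ties).\<close>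
definition knn_sets :: "(nat \<Rightarrow> 'a::metric_space) \<Rightarrow> 'a \<Rightarrow> nat \<Rightarrow> nat \<Rightarrow> nat set set" where
  "knn_sets S s N k = {A. A \<subseteq> {1..N} \<and> card A = k \<and>
      (\<forall>a\<in>A. \<forall>b\<in>{1..N} - A. dist s (S a) \<le> dist s (S b))}"

text \<open>R_{N,t}: the largest distance from a target to one of its t nearest neighbours
  among S 1..S N (independent of tie-breaking).\<close>
definition Rdist :: "(nat \<Rightarrow> 'a::metric_space) \<Rightarrow> (nat \<Rightarrow> 'a) \<Rightarrow> nat \<Rightarrow> nat \<Rightarrow> nat \<Rightarrow> real" where
  "Rdist S Sstar M N t = Max (\<Union>m\<in>{1..M}. \<Union>A\<in>knn_sets S (Sstar m) N t. (\<lambda>n. dist (Sstar m) (S n)) ` A)"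

definition nn_idx :: "(nat \<Rightarrow> 'a::metric_space) \<Rightarrow> nat \<Rightarrow> nat \<Rightarrow> nat set" where
  "nn_idx S N n = {z. z \<in> {1..N} \<and> z \<noteq> n \<and> (\<forall>n'\<in>{1..N} - {n}. dist (S n) (S z) \<le> dist (S n) (S n'))}"

text \<open>Matrix entries. nb N m = index set of the k_N nearest neighbours of target m,
  z N n = zeta^N(n).\<close>
definition Psi :: "(nat \<Rightarrow> nat) \<Rightarrow> (nat \<Rightarrow> nat \<Rightarrow> nat set) \<Rightarrow> nat \<Rightarrow> nat \<Rightarrow> nat \<Rightarrow> real" where
  "Psi k nb N m n = (if n \<in> nb N m then 1 / real (k N) else 0)"

definition Lam :: "(nat \<Rightarrow> real) \<Rightarrow> (nat \<Rightarrow> nat \<Rightarrow> nat) \<Rightarrow> nat \<Rightarrow> nat \<Rightarrow> real" where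
  "Lam y z N n = (y n - y (z N n))\<^sup>2 / 2"

text \<open>Entry (m,m') of k_N * Psi^{N,k_N} Lambda^N (Psi^{N,k_N})^T.\<close>
definition kPLP :: "(nat \<Rightarrow> nat) \<Rightarrow> (nat \<Rightarrow> nat \<Rightarrow> nat set) \<Rightarrow> (nat \<Rightarrow> nat \<Rightarrow> nat) \<Rightarrow> (nat \<Rightarrow> real)
     \<Rightarrow> nat \<Rightarrow> nat \<Rightarrow> nat \<Rightarrow> real" where
  "kPLP k nb z y N m m' = real (k N) *
     (\<Sum>n\<in>{1..N}. Psi k nb N m n * Lam y z N n * Psi k nb N m' n)"

end

theory Submission
  imports Defs
begin

lemma angle_sep:
  fixes a b :: "'a::euclidean_space"
  assumes a0: "a \<noteq> 0" and b0: "b \<noteq> 0" and ha: "norm a \<le> norm (a - b)" and hb: "norm b \<le> norm (a - b)"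
  shows "1 \<le> norm (a /\<^sub>R norm a - b /\<^sub>R norm b)"
proof -
  have na: "norm a > 0" and nb: "norm b > 0" using a0 b0 by auto
  have e: "(norm (a - b))\<^sup>2 = (norm a)\<^sup>2 + (norm b)\<^sup>2 - 2 * (a \<bullet> b)"
    by (simp add: power2_norm_eq_inner algebra_simps inner_commute)
  have "(norm a)\<^sup>2 \<le> (norm (a - b))\<^sup>2" using ha by (simp add: power_mono)
  hence i1: "2 * (a \<bullet> b) \<le> (norm b)\<^sup>2" using e by linarith
  have "(norm b)\<^sup>2 \<le> (norm (a - b))\<^sup>2" using hb by (simp add: power_mono)
  hence i2: "2 * (a \<bullet> b) \<le> (norm a)\<^sup>2" using e by linarith
  have i3: "2 * (a \<bullet> b) \<le> norm a * norm b"
  proof (cases "norm a \<le> norm b")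
    case True then show ?thesis using i2 na by (simp add: power2_eq_square mult_left_mono order_trans)
  next
    case False then show ?thesis using i1 nb
      by (smt (verit, best) mult_right_mono power2_eq_square)
  qed
  define u where "u = a /\<^sub>R norm a"
  define v where "v = b /\<^sub>R norm b"
  have nu: "norm u = 1" and nv: "norm v = 1" using na nb by (auto simp: u_def v_def)
  have uv: "u \<bullet> v = (a \<bullet> b) / (norm a * norm b)" by (simp add: u_def v_def field_simps)
  have e2: "(norm (u - v))\<^sup>2 = (norm u)\<^sup>2 + (norm v)\<^sup>2 - 2 * (u \<bullet> v)"
    by (simp add: power2_norm_eq_inner algebra_simps inner_commute)
  have "(norm (a /\<^sub>R norm a - b /\<^sub>R norm b))\<^sup>2 = 2 - 2 * (a \<bullet> b) / (norm a * norm b)"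
    using e2 nu nv uv by (simp add: u_def v_def)
  also have "\<dots> \<ge> 1" using i3 na nb by (simp add: field_simps)
  finally have "1 \<le> (norm (a /\<^sub>R norm a - b /\<^sub>R norm b))\<^sup>2" .
  thus ?thesis using abs_le_square_iff[of 1 "norm (a /\<^sub>R norm a - b /\<^sub>R norm b)"] by simp
qed

lemma nn_indegree_bound:
  "\<exists>K::nat. \<forall>(X::'a::euclidean_space set) y. finite X \<longrightarrow> y \<notin> X \<longrightarrow>
     (\<forall>x\<in>X. \<forall>x'\<in>X. x' \<noteq> x \<longrightarrow> dist x y \<le> dist x x') \<longrightarrow> card X \<le> K"
proof -
  have "compact (sphere (0::'a) 1)" by simp
  then obtain F where F: "finite F" "F \<subseteq> sphere 0 1" "sphere (0::'a) 1 \<subseteq> (\<Union>c\<in>F. ball c (1/2))"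
    by (rule compactE_image[of _ _ "\<lambda>c. ball c (1/2)"]) auto
  show ?thesis
  proof (intro exI[of _ "card F"] allI impI)
    fix X :: "'a set" and y
    assume fX: "finite X" and yX: "y \<notin> X" and nn: "\<forall>x\<in>X. \<forall>x'\<in>X. x' \<noteq> x \<longrightarrow> dist x y \<le> dist x x'"
    define u where "u x = (x - y) /\<^sub>R norm (x - y)" for x
    have us: "u x \<in> sphere 0 1" if "x \<in> X" for x
    proof -
      have "x - y \<noteq> 0" using that yX by auto
      thus ?thesis by (simp add: u_def)
    qed
    define g where "g x = (SOME c. c \<in> F \<and> u x \<in> ball c (1/2))" for x
    have g: "g x \<in> F \<and> u x \<in> ball (g x) (1/2)" if "x \<in> X" for x
      unfolding g_def by (rule someI_ex) (use F(3) us[OF that] in blast)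
    have sep: "1 \<le> dist (u x) (u x')" if "x \<in> X" "x' \<in> X" "x \<noteq> x'" for x x'
    proof -
      have "1 \<le> norm ((x - y) /\<^sub>R norm (x - y) - (x' - y) /\<^sub>R norm (x' - y))"
      proof (rule angle_sep)
        show "x - y \<noteq> 0" "x' - y \<noteq> 0" using that yX by auto
        show "norm (x - y) \<le> norm (x - y - (x' - y))" using nn that by (auto simp: dist_norm)
        have "dist x' y \<le> dist x' x" using nn that by auto
        thus "norm (x' - y) \<le> norm (x - y - (x' - y))" by (simp add: dist_norm norm_minus_commute)
      qed
      thus ?thesis by (simp add: u_def dist_norm)
    qed
    have "inj_on g X"
    proof (rule inj_onI, rule ccontr)
      fix x x' assume xx: "x \<in> X" "x' \<in> X" "g x = g x'" "x \<noteq> x'"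
      have "dist (u x) (u x') \<le> dist (u x) (g x) + dist (g x) (u x')" by (rule dist_triangle)
      also have "\<dots> < 1" using g[OF xx(1)] g[OF xx(2)] xx(3) by (simp add: dist_commute)
      finally show False using sep[OF xx(1,2,4)] by simp
    qed
    moreover have "g ` X \<subseteq> F" using g by auto
    ultimately show "card X \<le> card F" using F(1) by (simp add: card_inj_on_le)
  qed
qed

lemma knn_sets_sub: "A \<in> knn_sets S s N t \<Longrightarrow> A \<subseteq> {1..N}"
  by (simp add: knn_sets_def)

lemma knn_sets_card: "A \<in> knn_sets S s N t \<Longrightarrow> card A = t"
  by (simp add: knn_sets_def)

lemma knn_sets_le: "A \<in> knn_sets S s N t \<Longrightarrow> a \<in> A \<Longrightarrow> b \<in> {1..N} \<Longrightarrow> b \<notin> A \<Longrightarrow> dist s (S a) \<le> dist s (S b)"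
  by (simp add: knn_sets_def)

lemma knn_sets_finite: "finite (knn_sets S s N t)"
proof -
  have "knn_sets S s N t \<subseteq> Pow {1..N}" by (auto simp: knn_sets_def)
  thus ?thesis by (rule finite_subset) simp
qed

lemma knn_exists: "t \<le> N \<Longrightarrow> \<exists>A. A \<in> knn_sets S s N t"
proof (induction t)
  case 0
  show ?case by (rule exI[of _ "{}"]) (simp add: knn_sets_def)
next
  case (Suc t)
  then obtain A where A: "A \<in> knn_sets S s N t" by auto
  have Asub: "A \<subseteq> {1..N}" and cA: "card A = t" using A by (auto simp: knn_sets_def)
  define B where "B = {1..N} - A"
  have fB: "finite B" by (simp add: B_def)
  have "card B = N - t" using Asub cA by (simp add: B_def card_Diff_subset finite_subset)
  hence Bne: "B \<noteq> {}" using Suc.prems by auto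
  define \<mu> where "\<mu> = Min ((\<lambda>b. dist s (S b)) ` B)"
  have "\<mu> \<in> (\<lambda>b. dist s (S b)) ` B" unfolding \<mu>_def using fB Bne by (intro Min_in) auto
  then obtain b where b: "b \<in> B" "dist s (S b) = \<mu>" by auto
  have bmin: "dist s (S b) \<le> dist s (S b')" if "b' \<in> B" for b'
    using b that fB by (auto simp: \<mu>_def)
  have "insert b A \<in> knn_sets S s N (Suc t)"
    unfolding knn_sets_def
  proof (intro CollectI conjI ballI)
    show "insert b A \<subseteq> {1..N}" using Asub b by (auto simp: B_def)
    show "card (insert b A) = Suc t" using b cA Asub by (auto simp: B_def finite_subset)
    fix x y assume x: "x \<in> insert b A" and y: "y \<in> {1..N} - insert b A"
    show "dist s (S x) \<le> dist s (S y)"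
    proof (cases "x = b")
      case True thus ?thesis using bmin y by (auto simp: B_def)
    next
      case False thus ?thesis using x y A by (auto simp: knn_sets_def)
    qed
  qed
  thus ?case by blast
qed

lemma Rdist_finite: fixes M N t :: nat and Sstar :: "nat \<Rightarrow> 'a::metric_space" shows "finite (\<Union>m\<in>{1..M}. \<Union>A\<in>knn_sets S (Sstar m) N t. (\<lambda>n. dist (Sstar m) (S n)) ` A)"
  by (intro finite_UN_I finite_imageI knn_sets_finite) (auto dest: knn_sets_sub intro: finite_subset)

lemma Rdist_ge: fixes M N t :: nat and Sstar :: "nat \<Rightarrow> 'a::metric_space" shows "m \<in> {1..M} \<Longrightarrow> A \<in> knn_sets S (Sstar m) N t \<Longrightarrow> n \<in> A \<Longrightarrow>
    dist (Sstar m) (S n) \<le> Rdist S Sstar M N t"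
  unfolding Rdist_def by (rule Max_ge[OF Rdist_finite]) blast

lemma Rdist_le:
  assumes "1 \<le> M" "1 \<le> t" "t \<le> N"
    and bnd: "\<And>m A n. m \<in> {1..M} \<Longrightarrow> A \<in> knn_sets S (Sstar m) N t \<Longrightarrow> n \<in> A \<Longrightarrow> dist (Sstar m) (S n) \<le> \<eta>"
  shows "Rdist S Sstar M N t \<le> \<eta>"
proof -
  obtain A where A: "A \<in> knn_sets S (Sstar 1) N t" using knn_exists assms by blast
  have "A \<noteq> {}" using A assms(2) by (auto simp: knn_sets_def)
  then obtain n where "n \<in> A" by auto
  have "dist (Sstar 1) (S n) \<in> (\<Union>m\<in>{1..M}. \<Union>A\<in>knn_sets S (Sstar m) N t. (\<lambda>n. dist (Sstar m) (S n)) ` A)"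
    using A assms(1) \<open>n \<in> A\<close> by force
  hence ne: "(\<Union>m\<in>{1..M}. \<Union>A\<in>knn_sets S (Sstar m) N t. (\<lambda>n. dist (Sstar m) (S n)) ` A) \<noteq> {}"
    by blast
  show ?thesis unfolding Rdist_def
    by (rule Max.boundedI[OF Rdist_finite ne]) (use bnd in auto)
qed

lemma Rdist_mono:
  assumes "1 \<le> M" "1 \<le> t" "t \<le> N" "N \<le> N'"
  shows "Rdist S Sstar M N' t \<le> Rdist S Sstar M N t"
proof (rule Rdist_le)
  show "1 \<le> M" "1 \<le> t" "t \<le> N'" using assms by auto
  fix m A' a assume m: "m \<in> {1..M}" and A': "A' \<in> knn_sets S (Sstar m) N' t" and a: "a \<in> A'"
  obtain A where A: "A \<in> knn_sets S (Sstar m) N t" using knn_exists assms by blast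
  show "dist (Sstar m) (S a) \<le> Rdist S Sstar M N t"
  proof (cases "a \<in> A")
    case True thus ?thesis using Rdist_ge[where Sstar=Sstar and S=S, OF m A True] by blast
  next
    case False
    have "\<not> A \<subseteq> A'"
    proof
      assume "A \<subseteq> A'"
      moreover have "finite A'" using A' by (auto dest!: knn_sets_sub intro: finite_subset)
      moreover have "card A = card A'" using A A' by (simp add: knn_sets_card)
      ultimately have "A = A'" by (simp add: card_subset_eq)
      thus False using a False by simp
    qed
    then obtain b where b: "b \<in> A" "b \<notin> A'" by auto
    have "b \<in> {1..N'}" using b knn_sets_sub[OF A] assms by auto
    hence "dist (Sstar m) (S a) \<le> dist (Sstar m) (S b)" using knn_sets_le[OF A' a] b by blast
    also have "\<dots> \<le> Rdist S Sstar M N t" using Rdist_ge[where Sstar=Sstar and S=S, OF m A b(1)] .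
    finally show ?thesis .
  qed
qed

lemma knn_eventually_close:
  fixes S Sstar :: "nat \<Rightarrow> 'a::metric_space"
  assumes infill: "\<And>m U. m \<in> {1..M} \<Longrightarrow> open U \<Longrightarrow> Sstar m \<in> U \<Longrightarrow> infinite {n. n \<ge> 1 \<and> S n \<in> U}"
    and eta: "\<eta> > 0"
  shows "eventually (\<lambda>N. \<forall>m\<in>{1..M}. \<forall>A\<in>knn_sets S (Sstar m) N t. \<forall>a\<in>A. dist (Sstar m) (S a) < \<eta>) sequentially"
proof (rule eventually_ball_finite)
  show "finite {1..M}" by simp
  show "\<forall>m\<in>{1..M}. eventually (\<lambda>N. \<forall>A\<in>knn_sets S (Sstar m) N t. \<forall>a\<in>A. dist (Sstar m) (S a) < \<eta>) sequentially"
  proof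
  fix m assume m: "m \<in> {1..M}"
  have "infinite {n. n \<ge> 1 \<and> S n \<in> ball (Sstar m) \<eta>}" by (rule infill[OF m]) (use eta in auto)
  then obtain T0 where T0: "finite T0" "card T0 = t" "T0 \<subseteq> {n. n \<ge> 1 \<and> S n \<in> ball (Sstar m) \<eta>}"
    using infinite_arbitrarily_large by blast
  show "eventually (\<lambda>N. \<forall>A\<in>knn_sets S (Sstar m) N t. \<forall>a\<in>A. dist (Sstar m) (S a) < \<eta>) sequentially"
  proof (rule eventually_sequentiallyI[of "Sup T0"])
    fix N assume N: "Sup T0 \<le> N"
    have T0N: "T0 \<subseteq> {1..N}"
    proof
      fix x assume "x \<in> T0"
      hence "x \<le> Sup T0" using T0(1) by (simp add: le_cSup_finite)
      thus "x \<in> {1..N}" using N T0(3) \<open>x \<in> T0\<close> by auto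
    qed
    show "\<forall>A\<in>knn_sets S (Sstar m) N t. \<forall>a\<in>A. dist (Sstar m) (S a) < \<eta>"
    proof (intro ballI, rule ccontr)
      fix A a assume A: "A \<in> knn_sets S (Sstar m) N t" and a: "a \<in> A" and na: "\<not> dist (Sstar m) (S a) < \<eta>"
      have "\<not> T0 \<subseteq> A"
      proof
        assume "T0 \<subseteq> A"
        moreover have "finite A" using A by (auto dest!: knn_sets_sub intro: finite_subset)
        moreover have "card T0 = card A" using A T0 by (simp add: knn_sets_card)
        ultimately have "T0 = A" by (simp add: card_subset_eq)
        thus False using a na T0(3) by auto
      qed
      then obtain b where b: "b \<in> T0" "b \<notin> A" by auto
      have "dist (Sstar m) (S a) \<le> dist (Sstar m) (S b)" using knn_sets_le[OF A a] b T0N by auto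
      also have "\<dots> < \<eta>" using b T0(3) by auto
      finally show False using na by simp
    qed
  qed
qed
qed

context
  fixes S Sstar :: "nat \<Rightarrow> 'a::metric_space" and M :: nat and a :: "nat \<Rightarrow> real" and k :: "nat \<Rightarrow> nat"
  assumes M1: "1 \<le> M"
    and infill: "\<And>m U. m \<in> {1..M} \<Longrightarrow> open U \<Longrightarrow> Sstar m \<in> U \<Longrightarrow> infinite {n. n \<ge> 1 \<and> S n \<in> U}"
    and a_pos: "\<And>t. t \<ge> 1 \<Longrightarrow> a t > 0"
    and a_lim: "a \<longlonglongrightarrow> 0"
    and k1: "k 1 = 1"
    and kstep: "\<And>N. N \<ge> 1 \<Longrightarrow> k (Suc N) =
        (if Rdist S Sstar M (Suc N) (k N + 1) \<le> a (k N) then k N + 1 else k N)"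
begin

lemma k_basic: "N \<ge> 1 \<Longrightarrow> 1 \<le> k N \<and> k N \<le> N"
proof (induction N rule: nat_induct_at_least)
  case base thus ?case using k1 by simp
next
  case (Suc n) thus ?case using kstep[of n] by auto
qed

lemma k_step_le: "N \<ge> 1 \<Longrightarrow> k N \<le> k (Suc N) \<and> k (Suc N) \<le> Suc (k N)"
  using kstep[of N] by auto

lemma k_mono: assumes "1 \<le> N" "N \<le> N'" shows "k N \<le> k N'"
  using assms(2)
proof (induction N' rule: dec_induct)
  case base thus ?case by simp
next
  case (step n) thus ?case using k_step_le[of n] assms(1) by auto
qed

lemma k_unbounded: "\<exists>N0\<ge>1. k N0 \<ge> T"
proof (induction T)
  case 0 thus ?case by auto
next
  case (Suc T)
  then obtain N0 where N0: "N0 \<ge> 1" "k N0 \<ge> T" by auto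
  show ?case
  proof (cases "k N0 \<ge> Suc T")
    case True thus ?thesis using N0 by auto
  next
    case False
    define t where "t = k N0"
    have t1: "t \<ge> 1" using k_basic[OF N0(1)] by (simp add: t_def)
    have ev1: "eventually (\<lambda>N. \<forall>m\<in>{1..M}. \<forall>A\<in>knn_sets S (Sstar m) N (t+1). \<forall>b\<in>A. dist (Sstar m) (S b) < a t) sequentially"
      by (rule knn_eventually_close[OF infill]) (use a_pos t1 in auto)
    have ev2: "eventually (\<lambda>N. N \<ge> N0 + t + 1) sequentially" by (rule eventually_ge_at_top)
    obtain N where N1: "\<forall>m\<in>{1..M}. \<forall>A\<in>knn_sets S (Sstar m) (Suc N) (t+1). \<forall>b\<in>A. dist (Sstar m) (S b) < a t"
      and N2: "N \<ge> N0 + t + 1"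
      using eventually_conj[OF sequentially_offset[OF ev1, of 1] ev2] eventually_sequentially by auto
    have R: "Rdist S Sstar M (Suc N) (t + 1) \<le> a t"
      by (rule Rdist_le) (use M1 N2 N1 in \<open>auto intro: less_imp_le\<close>)
    have kN: "k N \<ge> t" using k_mono[of N0 N] N0 N2 by (simp add: t_def)
    show ?thesis
    proof (cases "k N \<ge> Suc T")
      case True thus ?thesis using N0 N2 by (intro exI[of _ N]) auto
    next
      case False
      hence "k N = t" using kN N0 False by (simp add: t_def)
      hence "k (Suc N) = t + 1" using kstep[of N] R N2 by simp
      thus ?thesis using N0 False \<open>k N = t\<close> t_def N0 by (intro exI[of _ "Suc N"]) auto
    qed
  qed
qed

lemma k_eventually: "eventually (\<lambda>N. k N \<ge> T) sequentially"
proof -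
  obtain N0 where "N0 \<ge> 1" "k N0 \<ge> T" using k_unbounded by blast
  thus ?thesis using k_mono[of N0] by (intro eventually_sequentiallyI[of N0]) (auto intro: order_trans)
qed

lemma Rdist_k: "N \<ge> 1 \<Longrightarrow> k N \<ge> 2 \<Longrightarrow> Rdist S Sstar M N (k N) \<le> a (k N - 1)"
proof (induction N rule: nat_induct_at_least)
  case base thus ?case using k1 by simp
next
  case (Suc n)
  show ?case
  proof (cases "Rdist S Sstar M (Suc n) (k n + 1) \<le> a (k n)")
    case True thus ?thesis using kstep[OF Suc.hyps] by simp
  next
    case False
    hence kk: "k (Suc n) = k n" using kstep[OF Suc.hyps] by simp
    have b: "1 \<le> k n \<and> k n \<le> n" using k_basic Suc.hyps by blast
    have "Rdist S Sstar M (Suc n) (k n) \<le> Rdist S Sstar M n (k n)"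
      by (rule Rdist_mono) (use M1 b in auto)
    also have "\<dots> \<le> a (k n - 1)" using Suc.IH Suc.prems kk by simp
    finally show ?thesis using kk by simp
  qed
qed

lemma knn_k_close:
  assumes "\<eta> > 0"
  shows "eventually (\<lambda>N. \<forall>m\<in>{1..M}. \<forall>A\<in>knn_sets S (Sstar m) N (k N). \<forall>n\<in>A. dist (Sstar m) (S n) \<le> \<eta>) sequentially"
proof -
  have "eventually (\<lambda>t. dist (a t) 0 < \<eta>) sequentially" using a_lim assms by (rule tendstoD)
  then obtain T where T: "\<And>t. t \<ge> T \<Longrightarrow> a t < \<eta>" unfolding eventually_sequentially by (auto simp: dist_real_def abs_less_iff)
  have "eventually (\<lambda>N. k N \<ge> T + 2 \<and> N \<ge> 1) sequentially"
    using eventually_conj[OF k_eventually eventually_ge_at_top] by blast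
  thus ?thesis
  proof eventually_elim
    case (elim N)
    have "Rdist S Sstar M N (k N) \<le> a (k N - 1)" using Rdist_k elim by auto
    also have "\<dots> < \<eta>" using T elim by auto
    finally show ?case using Rdist_ge[where S=S and Sstar=Sstar] by (meson order_trans less_imp_le)
  qed
qed

end

lemma integrable_prod_sq:
  fixes f g :: "'a \<Rightarrow> real"
  assumes [measurable]: "f \<in> borel_measurable M" "g \<in> borel_measurable M"
    and "integrable M (\<lambda>x. (f x)\<^sup>2)" "integrable M (\<lambda>x. (g x)\<^sup>2)"
  shows "integrable M (\<lambda>x. f x * g x)"
proof -
  have h: "integrable M (\<lambda>x. (f x)\<^sup>2 + (g x)\<^sup>2)" using assms by simp
  show ?thesis
  proof (rule Bochner_Integration.integrable_bound[OF h])
  show "(\<lambda>x. f x * g x) \<in> borel_measurable M" by simp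
  have "\<bar>f x * g x\<bar> \<le> (f x)\<^sup>2 + (g x)\<^sup>2" for x
  proof -
    have "0 \<le> (\<bar>f x\<bar> - \<bar>g x\<bar>)\<^sup>2" by simp
    hence "2 * \<bar>f x\<bar> * \<bar>g x\<bar> \<le> (f x)\<^sup>2 + (g x)\<^sup>2" by (simp add: power2_eq_square algebra_simps)
    moreover have "0 \<le> \<bar>f x\<bar> * \<bar>g x\<bar>" by simp
    ultimately show ?thesis unfolding abs_mult by linarith
  qed
  thus "AE x in M. norm (f x * g x) \<le> norm ((f x)\<^sup>2 + (g x)\<^sup>2)" by simp
qed
qed

lemma (in prob_space) var_sum_sparse:
  fixes W :: "'i \<Rightarrow> 'a \<Rightarrow> real"
  assumes fin: "finite I"
    and rv[measurable]: "\<And>i. i \<in> I \<Longrightarrow> W i \<in> borel_measurable M"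
    and sq: "\<And>i. i \<in> I \<Longrightarrow> integrable M (\<lambda>\<omega>. (W i \<omega>)\<^sup>2)"
    and ind: "\<And>i j. i \<in> I \<Longrightarrow> j \<in> I \<Longrightarrow> (i, j) \<notin> D \<Longrightarrow>
        expectation (\<lambda>\<omega>. W i \<omega> * W j \<omega>) = expectation (W i) * expectation (W j)"
    and cov: "\<And>i j. i \<in> I \<Longrightarrow> j \<in> I \<Longrightarrow>
        expectation (\<lambda>\<omega>. W i \<omega> * W j \<omega>) - expectation (W i) * expectation (W j) \<le> B"
    and B: "B \<ge> 0"
  shows "variance (\<lambda>\<omega>. \<Sum>i\<in>I. W i \<omega>) \<le> B * real (card (D \<inter> I \<times> I))"
proof -
  have int: "integrable M (W i)" if "i \<in> I" for i
    using square_integrable_imp_integrable[OF rv[OF that] sq[OF that]] .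
  have intp: "integrable M (\<lambda>\<omega>. W i \<omega> * W j \<omega>)" if "i \<in> I" "j \<in> I" for i j
    using integrable_prod_sq[OF rv[OF that(1)] rv[OF that(2)] sq[OF that(1)] sq[OF that(2)]] .
  define \<mu> where "\<mu> i = expectation (W i)" for i
  define c where "c p = expectation (\<lambda>\<omega>. W (fst p) \<omega> * W (snd p) \<omega>) - \<mu> (fst p) * \<mu> (snd p)" for p
  have ES: "expectation (\<lambda>\<omega>. \<Sum>i\<in>I. W i \<omega>) = (\<Sum>i\<in>I. \<mu> i)"
    unfolding \<mu>_def by (rule Bochner_Integration.integral_sum) (use int in auto)
  have sqe: "(\<Sum>i\<in>I. W i \<omega>) - (\<Sum>i\<in>I. \<mu> i) = (\<Sum>i\<in>I. W i \<omega> - \<mu> i)" for \<omega>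
    by (simp add: sum_subtractf)
  have expand: "((\<Sum>i\<in>I. W i \<omega> - \<mu> i))\<^sup>2 = (\<Sum>p\<in>I \<times> I. (W (fst p) \<omega> - \<mu> (fst p)) * (W (snd p) \<omega> - \<mu> (snd p)))" for \<omega>
    by (simp add: power2_eq_square sum_product sum.cartesian_product case_prod_beta)
  have intt: "integrable M (\<lambda>\<omega>. (W (fst p) \<omega> - \<mu> (fst p)) * (W (snd p) \<omega> - \<mu> (snd p)))" if "p \<in> I \<times> I" for p
  proof -
    have e: "(\<lambda>\<omega>. (W (fst p) \<omega> - \<mu> (fst p)) * (W (snd p) \<omega> - \<mu> (snd p))) =
      (\<lambda>\<omega>. W (fst p) \<omega> * W (snd p) \<omega> - \<mu> (snd p) * W (fst p) \<omega> - \<mu> (fst p) * W (snd p) \<omega> + \<mu> (fst p) * \<mu> (snd p))"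
      by (auto simp: algebra_simps)
    show ?thesis unfolding e using that int intp by auto
  qed
  have Et: "expectation (\<lambda>\<omega>. (W (fst p) \<omega> - \<mu> (fst p)) * (W (snd p) \<omega> - \<mu> (snd p))) = c p" if "p \<in> I \<times> I" for p
  proof -
    have e: "(\<lambda>\<omega>. (W (fst p) \<omega> - \<mu> (fst p)) * (W (snd p) \<omega> - \<mu> (snd p))) =
      (\<lambda>\<omega>. W (fst p) \<omega> * W (snd p) \<omega> - \<mu> (snd p) * W (fst p) \<omega> - \<mu> (fst p) * W (snd p) \<omega> + \<mu> (fst p) * \<mu> (snd p))"
      by (auto simp: algebra_simps)
    have i1: "integrable M (\<lambda>\<omega>. W (fst p) \<omega> * W (snd p) \<omega>)" using intp that by auto
    have i2: "integrable M (W (fst p))" "integrable M (W (snd p))" using int that by auto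
    show ?thesis unfolding e c_def using i1 i2 prob_space
      by (simp add: Bochner_Integration.integral_add Bochner_Integration.integral_diff \<mu>_def)
  qed
  have "variance (\<lambda>\<omega>. \<Sum>i\<in>I. W i \<omega>) = expectation (\<lambda>\<omega>. \<Sum>p\<in>I \<times> I. (W (fst p) \<omega> - \<mu> (fst p)) * (W (snd p) \<omega> - \<mu> (snd p)))"
    unfolding ES sqe expand ..
  also have "\<dots> = (\<Sum>p\<in>I \<times> I. c p)"
    by (subst Bochner_Integration.integral_sum) (use intt Et in auto)
  also have "\<dots> = (\<Sum>p\<in>D \<inter> I \<times> I. c p)"
  proof (rule sum.mono_neutral_right)
    show "\<forall>p\<in>I \<times> I - D \<inter> I \<times> I. c p = 0"
    proof
      fix p assume "p \<in> I \<times> I - D \<inter> I \<times> I"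
      thus "c p = 0" using ind[of "fst p" "snd p"] by (cases p) (auto simp: c_def \<mu>_def)
    qed
  qed (use fin in auto)
  also have "\<dots> \<le> (\<Sum>p\<in>D \<inter> I \<times> I. B)"
    by (rule sum_mono) (use cov in \<open>auto simp: c_def \<mu>_def\<close>)
  also have "\<dots> = B * real (card (D \<inter> I \<times> I))" by simp
  finally show ?thesis .
qed

lemma pow4_3_bound:
  fixes u v w :: real
  shows "(u + v + w) ^ 4 \<le> 27 * (u ^ 4 + v ^ 4 + w ^ 4)"
proof -
  have s1: "(u + v + w)\<^sup>2 \<le> 3 * (u\<^sup>2 + v\<^sup>2 + w\<^sup>2)"
  proof -
    have "3 * (u\<^sup>2 + v\<^sup>2 + w\<^sup>2) - (u + v + w)\<^sup>2 = (u - v)\<^sup>2 + (v - w)\<^sup>2 + (u - w)\<^sup>2"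
      by (simp add: power2_eq_square algebra_simps)
    moreover have "(u - v)\<^sup>2 + (v - w)\<^sup>2 + (u - w)\<^sup>2 \<ge> 0" by simp
    ultimately show ?thesis by linarith
  qed
  have s2: "(u\<^sup>2 + v\<^sup>2 + w\<^sup>2)\<^sup>2 \<le> 3 * ((u\<^sup>2)\<^sup>2 + (v\<^sup>2)\<^sup>2 + (w\<^sup>2)\<^sup>2)"
  proof -
    have "3 * ((u\<^sup>2)\<^sup>2 + (v\<^sup>2)\<^sup>2 + (w\<^sup>2)\<^sup>2) - (u\<^sup>2 + v\<^sup>2 + w\<^sup>2)\<^sup>2 = (u\<^sup>2 - v\<^sup>2)\<^sup>2 + (v\<^sup>2 - w\<^sup>2)\<^sup>2 + (u\<^sup>2 - w\<^sup>2)\<^sup>2"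
      by (simp add: power2_eq_square algebra_simps)
    moreover have "(u\<^sup>2 - v\<^sup>2)\<^sup>2 + (v\<^sup>2 - w\<^sup>2)\<^sup>2 + (u\<^sup>2 - w\<^sup>2)\<^sup>2 \<ge> 0" by simp
    ultimately show ?thesis by linarith
  qed
  have "(u + v + w) ^ 4 = ((u + v + w)\<^sup>2)\<^sup>2" by simp
  also have "\<dots> \<le> (3 * (u\<^sup>2 + v\<^sup>2 + w\<^sup>2))\<^sup>2" by (rule power_mono[OF s1]) simp
  also have "\<dots> = 9 * (u\<^sup>2 + v\<^sup>2 + w\<^sup>2)\<^sup>2" by (subst power_mult_distrib) simp
  also have "\<dots> \<le> 9 * (3 * ((u\<^sup>2)\<^sup>2 + (v\<^sup>2)\<^sup>2 + (w\<^sup>2)\<^sup>2))" using s2 by simp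
  also have "\<dots> = 27 * (u ^ 4 + v ^ 4 + w ^ 4)" by simp
  finally show ?thesis .
qed

lemma (in prob_space) indep_blocks_integral:
  fixes X :: "'i \<Rightarrow> 'a \<Rightarrow> real" and G H :: "('i \<Rightarrow> real) \<Rightarrow> real"
  assumes ind: "indep_vars (\<lambda>_. borel) X I" and AB: "A \<inter> B = {}" "A \<subseteq> I" "B \<subseteq> I"
    and G: "G \<in> borel_measurable (Pi\<^sub>M A (\<lambda>_. borel))" and H: "H \<in> borel_measurable (Pi\<^sub>M B (\<lambda>_. borel))"
    and iG: "integrable M (\<lambda>\<omega>. G (restrict (\<lambda>i. X i \<omega>) A))"
    and iH: "integrable M (\<lambda>\<omega>. H (restrict (\<lambda>i. X i \<omega>) B))"
  shows "expectation (\<lambda>\<omega>. G (restrict (\<lambda>i. X i \<omega>) A) * H (restrict (\<lambda>i. X i \<omega>) B)) =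
         expectation (\<lambda>\<omega>. G (restrict (\<lambda>i. X i \<omega>) A)) * expectation (\<lambda>\<omega>. H (restrict (\<lambda>i. X i \<omega>) B))"
proof -
  have "indep_var (Pi\<^sub>M A (\<lambda>_. borel)) (\<lambda>\<omega>. restrict (\<lambda>i. X i \<omega>) A) (Pi\<^sub>M B (\<lambda>_. borel)) (\<lambda>\<omega>. restrict (\<lambda>i. X i \<omega>) B)"
    by (rule indep_var_restrict[OF ind AB])
  hence "indep_var borel (G \<circ> (\<lambda>\<omega>. restrict (\<lambda>i. X i \<omega>) A)) borel (H \<circ> (\<lambda>\<omega>. restrict (\<lambda>i. X i \<omega>) B))"
    by (rule indep_var_compose[OF _ G H])
  hence iv: "indep_var borel (\<lambda>\<omega>. G (restrict (\<lambda>i. X i \<omega>) A)) borel (\<lambda>\<omega>. H (restrict (\<lambda>i. X i \<omega>) B))"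
    by (simp add: comp_def)
  show ?thesis by (rule indep_var_lebesgue_integral(1)[OF iv iG iH])
qed

locale ctx = prob_space P for P :: "'w measure" +
  fixes S :: "nat \<Rightarrow> 'b::metric_space" and Y Ys :: "nat \<Rightarrow> 'w \<Rightarrow> real" and M :: nat
    and f rho2 alpha4 :: "'b \<Rightarrow> real" and L C :: real
  assumes rvY: "\<And>n. n \<ge> 1 \<Longrightarrow> Y n \<in> borel_measurable P"
    and intY: "\<And>n. n \<ge> 1 \<Longrightarrow> integrable P (Y n) \<and> integrable P (\<lambda>\<omega>. (Y n \<omega>)\<^sup>2)
                   \<and> integrable P (\<lambda>\<omega>. (Y n \<omega> - f (S n)) ^ 4)"
    and meanY: "\<And>n. n \<ge> 1 \<Longrightarrow> expectation (Y n) = f (S n)"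
    and indep: "indep_vars (\<lambda>_. borel) (case_sum Y Ys) (Inl ` {1..} \<union> Inr ` {1..M})"
    and varY: "\<And>n. n \<ge> 1 \<Longrightarrow> variance (Y n) = rho2 (S n)"
    and alpha_range: "\<And>s. 0 \<le> alpha4 s \<and> alpha4 s \<le> C"
    and m4Y: "\<And>n. n \<ge> 1 \<Longrightarrow> expectation (\<lambda>\<omega>. (Y n \<omega> - f (S n)) ^ 4) = alpha4 (S n)"
begin

abbreviation "XX \<equiv> case_sum Y Ys"
abbreviation "II \<equiv> Inl ` {1..} \<union> Inr ` {1..M}"

definition Wf :: "nat \<Rightarrow> nat \<Rightarrow> 'w \<Rightarrow> real" where
  "Wf a b \<omega> = (Y a \<omega> - Y b \<omega>)\<^sup>2 / 2"

lemma Wf_meas[measurable]: "a \<ge> 1 \<Longrightarrow> b \<ge> 1 \<Longrightarrow> Wf a b \<in> borel_measurable P"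
  unfolding Wf_def using rvY by measurable

lemma Wf_eq: "Wf a b = (\<lambda>\<omega>. (Y a \<omega> - Y b \<omega>)\<^sup>2 / 2)"
  by (rule ext) (simp add: Wf_def)

lemma Wf_nonneg: "Wf a b \<omega> \<ge> 0" by (simp add: Wf_def)

lemma Wf_restrict: "Wf a b \<omega> = (\<lambda>x. (x (Inl a) - x (Inl b))\<^sup>2 / 2) (restrict (\<lambda>i. XX i \<omega>) {Inl a, Inl b})"
  by (simp add: Wf_def)

lemma Wf_sq_int: assumes "a \<ge> 1" "b \<ge> 1" shows "integrable P (\<lambda>\<omega>. (Wf a b \<omega>)\<^sup>2)"
    and "expectation (\<lambda>\<omega>. (Wf a b \<omega>)\<^sup>2) \<le> 27 / 4 * (2 * C + (f (S a) - f (S b)) ^ 4)"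
proof -
  define \<Delta> where "\<Delta> = f (S a) - f (S b)"
  have bnd: "(Wf a b \<omega>)\<^sup>2 \<le> 27 / 4 * ((Y a \<omega> - f (S a)) ^ 4 + (Y b \<omega> - f (S b)) ^ 4 + \<Delta> ^ 4)" for \<omega>
  proof -
    have e: "Y a \<omega> - Y b \<omega> = (Y a \<omega> - f (S a)) + (-(Y b \<omega> - f (S b))) + \<Delta>" by (simp add: \<Delta>_def)
    have "(Wf a b \<omega>)\<^sup>2 = (Y a \<omega> - Y b \<omega>) ^ 4 / 4" by (simp add: Wf_def power2_eq_square power4_eq_xxxx)
    also have "\<dots> \<le> 27 * ((Y a \<omega> - f (S a)) ^ 4 + (-(Y b \<omega> - f (S b))) ^ 4 + \<Delta> ^ 4) / 4"
      unfolding e by (intro divide_right_mono pow4_3_bound) simp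
    also have "\<dots> = 27 * ((Y a \<omega> - f (S a)) ^ 4 + (Y b \<omega> - f (S b)) ^ 4 + \<Delta> ^ 4) / 4"
      by (simp only: power_minus_even even_numeral)
    finally show ?thesis by simp
  qed
  have ib: "integrable P (\<lambda>\<omega>. 27 / 4 * ((Y a \<omega> - f (S a)) ^ 4 + (Y b \<omega> - f (S b)) ^ 4 + \<Delta> ^ 4))"
    using intY[OF assms(1)] intY[OF assms(2)] by simp
  show i: "integrable P (\<lambda>\<omega>. (Wf a b \<omega>)\<^sup>2)"
    by (rule Bochner_Integration.integrable_bound[OF ib]) (use bnd assms in auto)
  have "expectation (\<lambda>\<omega>. (Wf a b \<omega>)\<^sup>2) \<le> expectation (\<lambda>\<omega>. 27 / 4 * ((Y a \<omega> - f (S a)) ^ 4 + (Y b \<omega> - f (S b)) ^ 4 + \<Delta> ^ 4))"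
    by (rule integral_mono[OF i ib]) (use bnd in auto)
  also have "\<dots> = 27 / 4 * (alpha4 (S a) + alpha4 (S b) + \<Delta> ^ 4)"
    using intY[OF assms(1)] intY[OF assms(2)] m4Y[OF assms(1)] m4Y[OF assms(2)] prob_space by simp
  also have "\<dots> \<le> 27 / 4 * (2 * C + \<Delta> ^ 4)" using alpha_range[of "S a"] alpha_range[of "S b"] by simp
  finally show "expectation (\<lambda>\<omega>. (Wf a b \<omega>)\<^sup>2) \<le> 27 / 4 * (2 * C + (f (S a) - f (S b)) ^ 4)" by (simp add: \<Delta>_def)
qed

lemma Wf_int: "a \<ge> 1 \<Longrightarrow> b \<ge> 1 \<Longrightarrow> integrable P (Wf a b)"
  by (rule square_integrable_imp_integrable[OF Wf_meas Wf_sq_int(1)])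

lemma Wf_indep:
  assumes "a \<ge> 1" "b \<ge> 1" "c \<ge> 1" "d \<ge> 1" "{a, b} \<inter> {c, d} = {}"
  shows "expectation (\<lambda>\<omega>. Wf a b \<omega> * Wf c d \<omega>) = expectation (Wf a b) * expectation (Wf c d)"
proof -
  have G: "(\<lambda>x::nat+nat\<Rightarrow>real. (x (Inl a) - x (Inl b))\<^sup>2 / 2) \<in> borel_measurable (Pi\<^sub>M {Inl a, Inl b :: nat + nat} (\<lambda>_. borel))"
    by measurable
  have H: "(\<lambda>x::nat+nat\<Rightarrow>real. (x (Inl c) - x (Inl d))\<^sup>2 / 2) \<in> borel_measurable (Pi\<^sub>M {Inl c, Inl d :: nat + nat} (\<lambda>_. borel))"
    by measurable
  have "expectation (\<lambda>\<omega>. (\<lambda>x. (x (Inl a) - x (Inl b))\<^sup>2 / 2) (restrict (\<lambda>i. XX i \<omega>) {Inl a, Inl b}) *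
      (\<lambda>x. (x (Inl c) - x (Inl d))\<^sup>2 / 2) (restrict (\<lambda>i. XX i \<omega>) {Inl c, Inl d})) =
      expectation (\<lambda>\<omega>. (\<lambda>x. (x (Inl a) - x (Inl b))\<^sup>2 / 2) (restrict (\<lambda>i. XX i \<omega>) {Inl a, Inl b})) *
      expectation (\<lambda>\<omega>. (\<lambda>x. (x (Inl c) - x (Inl d))\<^sup>2 / 2) (restrict (\<lambda>i. XX i \<omega>) {Inl c, Inl d}))"
    by (rule indep_blocks_integral[OF indep _ _ _ G H])
       (use assms Wf_int[of a b, unfolded Wf_def] Wf_int[of c d, unfolded Wf_def] in \<open>auto simp: Wf_def\<close>)
  thus ?thesis by (simp only: Wf_eq restrict_apply insert_iff simp_thms if_True sum.simps)
qed

lemma Y_indep_mult: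
  assumes "a \<ge> 1" "b \<ge> 1" "a \<noteq> b"
  shows "expectation (\<lambda>\<omega>. Y a \<omega> * Y b \<omega>) = expectation (Y a) * expectation (Y b)"
proof -
  have G: "(\<lambda>x. x (Inl a)) \<in> borel_measurable (Pi\<^sub>M {Inl a :: nat + nat} (\<lambda>_. borel))" by measurable
  have H: "(\<lambda>x. x (Inl b)) \<in> borel_measurable (Pi\<^sub>M {Inl b :: nat + nat} (\<lambda>_. borel))" by measurable
  have "expectation (\<lambda>\<omega>. (\<lambda>x. x (Inl a)) (restrict (\<lambda>i. XX i \<omega>) {Inl a}) * (\<lambda>x. x (Inl b)) (restrict (\<lambda>i. XX i \<omega>) {Inl b})) =
      expectation (\<lambda>\<omega>. (\<lambda>x. x (Inl a)) (restrict (\<lambda>i. XX i \<omega>) {Inl a})) *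
      expectation (\<lambda>\<omega>. (\<lambda>x. x (Inl b)) (restrict (\<lambda>i. XX i \<omega>) {Inl b}))"
    by (rule indep_blocks_integral[OF indep _ _ _ G H]) (use assms intY in auto)
  thus ?thesis by simp
qed

lemma Wf_mean:
  assumes "a \<ge> 1" "b \<ge> 1" "a \<noteq> b"
  shows "expectation (Wf a b) = (rho2 (S a) + rho2 (S b) + (f (S a) - f (S b))\<^sup>2) / 2"
proof -
  have ia: "integrable P (Y a)" "integrable P (\<lambda>\<omega>. (Y a \<omega>)\<^sup>2)" using intY[OF assms(1)] by auto
  have ib: "integrable P (Y b)" "integrable P (\<lambda>\<omega>. (Y b \<omega>)\<^sup>2)" using intY[OF assms(2)] by auto
  have iab: "integrable P (\<lambda>\<omega>. Y a \<omega> * Y b \<omega>)"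
    by (rule integrable_prod_sq) (use rvY assms ia ib in auto)
  have e: "Wf a b = (\<lambda>\<omega>. ((Y a \<omega>)\<^sup>2 + (Y b \<omega>)\<^sup>2 - 2 * (Y a \<omega> * Y b \<omega>)) / 2)"
    by (auto simp: Wf_def power2_diff algebra_simps)
  have "expectation (Wf a b) = (expectation (\<lambda>\<omega>. (Y a \<omega>)\<^sup>2) + expectation (\<lambda>\<omega>. (Y b \<omega>)\<^sup>2) - 2 * expectation (\<lambda>\<omega>. Y a \<omega> * Y b \<omega>)) / 2"
    unfolding e using ia ib iab by simp
  also have "\<dots> = (rho2 (S a) + rho2 (S b) + (f (S a) - f (S b))\<^sup>2) / 2"
    using variance_eq[OF ia] variance_eq[OF ib] varY[OF assms(1)] varY[OF assms(2)]
      meanY[OF assms(1)] meanY[OF assms(2)] Y_indep_mult[OF assms]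
    by (simp add: power2_diff)
  finally show ?thesis .
qed

end

context ctx begin

lemma cheb_block:
  fixes A :: "nat set" and \<zeta> :: "nat \<Rightarrow> nat" and K :: nat and B2 c \<epsilon> :: real
  assumes fA: "finite A" and A1: "\<And>n. n \<in> A \<Longrightarrow> n \<ge> 1"
    and z1: "\<And>n. n \<in> A \<Longrightarrow> \<zeta> n \<ge> 1 \<and> \<zeta> n \<noteq> n"
    and deg: "\<And>x. card {n\<in>A. \<zeta> n = x} \<le> K"
    and t: "card A \<ge> 1"
    and eps: "\<epsilon> > 0"
    and bias: "\<bar>(\<Sum>n\<in>A. expectation (Wf n (\<zeta> n))) / real (card A) - c\<bar> \<le> \<epsilon> / 2"
    and m2: "\<And>n. n \<in> A \<Longrightarrow> expectation (\<lambda>\<omega>. (Wf n (\<zeta> n) \<omega>)\<^sup>2) \<le> B2"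
    and B2: "B2 \<ge> 0"
  shows "prob {\<omega> \<in> space P. \<bar>(\<Sum>n\<in>A. Wf n (\<zeta> n) \<omega>) / real (card A) - c\<bar> > \<epsilon>}
          \<le> 4 * B2 * (2 + 2 * real K) / (\<epsilon>\<^sup>2 * real (card A))"
proof -
  define t where "t = real (card A)"
  have tpos: "t > 0" using t by (simp add: t_def)
  define W where "W n = Wf n (\<zeta> n)" for n
  define Z where "Z \<omega> = (\<Sum>n\<in>A. W n \<omega>)" for \<omega>
  have Wm[measurable]: "W n \<in> borel_measurable P" if "n \<in> A" for n
    unfolding W_def using A1[OF that] z1[OF that] by (intro Wf_meas) auto
  have Wsq: "integrable P (\<lambda>\<omega>. (W n \<omega>)\<^sup>2)" if "n \<in> A" for n
    unfolding W_def using A1[OF that] z1[OF that] by (intro Wf_sq_int(1)) auto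
  have Wint: "integrable P (W n)" if "n \<in> A" for n
    using square_integrable_imp_integrable[OF Wm[OF that] Wsq[OF that]] .
  have Wp: "integrable P (\<lambda>\<omega>. W i \<omega> * W j \<omega>)" if "i \<in> A" "j \<in> A" for i j
    by (rule integrable_prod_sq) (use that Wm Wsq in auto)
  have Zm[measurable]: "Z \<in> borel_measurable P"
    unfolding Z_def by (rule borel_measurable_sum) (use Wm in auto)
  have Zsq: "integrable P (\<lambda>\<omega>. (Z \<omega>)\<^sup>2)"
  proof -
    have "(\<lambda>\<omega>. (Z \<omega>)\<^sup>2) = (\<lambda>\<omega>. \<Sum>i\<in>A. \<Sum>j\<in>A. W i \<omega> * W j \<omega>)"
      by (auto simp: Z_def power2_eq_square sum_product)
    thus ?thesis using Wp by simp
  qed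
  define D where "D = {(i, j). {i, \<zeta> i} \<inter> {j, \<zeta> j} \<noteq> {}}"
  have var: "variance Z \<le> B2 * real (card (D \<inter> A \<times> A))"
    unfolding Z_def
  proof (rule var_sum_sparse[OF fA Wm Wsq _ _ B2])
    fix i j assume ij: "i \<in> A" "j \<in> A" "(i, j) \<notin> D"
    show "expectation (\<lambda>\<omega>. W i \<omega> * W j \<omega>) = expectation (W i) * expectation (W j)"
      unfolding W_def by (rule Wf_indep) (use ij A1 z1 in \<open>auto simp: D_def\<close>)
  next
    fix i j assume ij: "i \<in> A" "j \<in> A"
    have mu: "expectation (W i) \<ge> 0" "expectation (W j) \<ge> 0"
      by (auto simp: W_def Wf_nonneg intro!: integral_nonneg_AE)
    have "expectation (\<lambda>\<omega>. W i \<omega> * W j \<omega>) \<le> expectation (\<lambda>\<omega>. ((W i \<omega>)\<^sup>2 + (W j \<omega>)\<^sup>2) / 2)"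
    proof (rule integral_mono[OF Wp[OF ij]])
      show "integrable P (\<lambda>\<omega>. ((W i \<omega>)\<^sup>2 + (W j \<omega>)\<^sup>2) / 2)" using Wsq ij by simp
      fix \<omega> show "W i \<omega> * W j \<omega> \<le> ((W i \<omega>)\<^sup>2 + (W j \<omega>)\<^sup>2) / 2"
        using sum_squares_ge_zero[of "W i \<omega> - W j \<omega>" 0]
        by (simp add: power2_eq_square algebra_simps)
    qed
    also have "\<dots> = (expectation (\<lambda>\<omega>. (W i \<omega>)\<^sup>2) + expectation (\<lambda>\<omega>. (W j \<omega>)\<^sup>2)) / 2"
      using Wsq ij by simp
    also have "\<dots> \<le> B2" using m2[OF ij(1)] m2[OF ij(2)] by (simp add: W_def)
    finally show "expectation (\<lambda>\<omega>. W i \<omega> * W j \<omega>) - expectation (W i) * expectation (W j) \<le> B2"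
      using mu by (smt (verit) mult_nonneg_nonneg)
  qed
  have cardD: "card (D \<inter> A \<times> A) \<le> (2 + 2 * K) * card A"
  proof -
    define J where "J i = {j\<in>A. {i, \<zeta> i} \<inter> {j, \<zeta> j} \<noteq> {}}" for i
    have e: "D \<inter> A \<times> A = Sigma A J" by (auto simp: D_def J_def)
    have cJ: "card (J i) \<le> 2 + 2 * K" if "i \<in> A" for i
    proof -
      have c2: "card {i, \<zeta> i} \<le> 2" by (cases "i = \<zeta> i") auto
      have "J i \<subseteq> {i, \<zeta> i} \<union> {j\<in>A. \<zeta> j = i} \<union> {j\<in>A. \<zeta> j = \<zeta> i}" by (auto simp: J_def)
      hence "card (J i) \<le> card ({i, \<zeta> i} \<union> {j\<in>A. \<zeta> j = i} \<union> {j\<in>A. \<zeta> j = \<zeta> i})"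
        by (rule card_mono[rotated]) (use fA in auto)
      also have "\<dots> \<le> card {i, \<zeta> i} + card {j\<in>A. \<zeta> j = i} + card {j\<in>A. \<zeta> j = \<zeta> i}"
        by (meson card_Un_le add_le_mono order_trans le_refl)
      also have "\<dots> \<le> 2 + K + K" using deg[of i] deg[of "\<zeta> i"] c2
        by (intro add_mono) auto
      finally show ?thesis by simp
    qed
    have "card (D \<inter> A \<times> A) = (\<Sum>i\<in>A. card (J i))"
      unfolding e by (rule card_SigmaI) (use fA in \<open>auto simp: J_def\<close>)
    also have "\<dots> \<le> (\<Sum>i\<in>A. 2 + 2 * K)" by (rule sum_mono) (use cJ in auto)
    finally show ?thesis by (simp add: mult.commute)
  qed
  have EZ: "expectation Z = (\<Sum>n\<in>A. expectation (W n))"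
    unfolding Z_def by (rule Bochner_Integration.integral_sum) (use Wint in auto)
  have sub: "{\<omega> \<in> space P. \<bar>(\<Sum>n\<in>A. Wf n (\<zeta> n) \<omega>) / real (card A) - c\<bar> > \<epsilon>}
      \<subseteq> {\<omega> \<in> space P. \<bar>Z \<omega> - expectation Z\<bar> \<ge> t * \<epsilon> / 2}"
  proof safe
    fix \<omega> assume \<omega>: "\<omega> \<in> space P" and gt: "\<epsilon> < \<bar>(\<Sum>n\<in>A. Wf n (\<zeta> n) \<omega>) / real (card A) - c\<bar>"
    have b: "\<bar>expectation Z / t - c\<bar> \<le> \<epsilon> / 2" using bias by (simp add: EZ W_def t_def)
    have zz: "Z \<omega> / t = (\<Sum>n\<in>A. Wf n (\<zeta> n) \<omega>) / real (card A)" by (simp add: Z_def W_def t_def)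
    have tri: "\<bar>Z \<omega> / t - c\<bar> \<le> \<bar>Z \<omega> / t - expectation Z / t\<bar> + \<bar>expectation Z / t - c\<bar>"
      by (rule order_trans[OF _ abs_triangle_ineq]) simp
    have "\<epsilon> / 2 < \<bar>Z \<omega> / t - expectation Z / t\<bar>"
      using gt b tri unfolding zz by linarith
    also have "\<dots> = \<bar>Z \<omega> - expectation Z\<bar> / t" using tpos by (simp add: diff_divide_distrib[symmetric])
    finally show "t * \<epsilon> / 2 \<le> \<bar>Z \<omega> - expectation Z\<bar>" using tpos by (simp add: field_simps)
  qed
  have "prob {\<omega> \<in> space P. \<bar>(\<Sum>n\<in>A. Wf n (\<zeta> n) \<omega>) / real (card A) - c\<bar> > \<epsilon>}
      \<le> prob {\<omega> \<in> space P. \<bar>Z \<omega> - expectation Z\<bar> \<ge> t * \<epsilon> / 2}"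
    by (rule finite_measure_mono[OF sub]) measurable
  also have "\<dots> \<le> variance Z / (t * \<epsilon> / 2)\<^sup>2"
    by (rule Chebyshev_inequality[OF Zm Zsq]) (use tpos eps in simp)
  also have "\<dots> \<le> B2 * ((2 + 2 * K) * t) / (t * \<epsilon> / 2)\<^sup>2"
  proof (rule divide_right_mono)
    have "real (card (D \<inter> A \<times> A)) \<le> (2 + 2 * K) * t"
      using cardD unfolding t_def by (metis of_nat_add of_nat_le_iff of_nat_mult of_nat_numeral)
    thus "variance Z \<le> B2 * ((2 + 2 * K) * t)" using var B2 by (smt (verit) mult_left_mono)
  qed simp
  also have "\<dots> = 4 * B2 * (2 + 2 * real K) / (\<epsilon>\<^sup>2 * t)"
    using tpos eps by (simp add: field_simps power2_eq_square)
  finally show ?thesis by (simp add: t_def)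
qed

end

lemma kPLP_diag:
  assumes "nb N m \<subseteq> {1..N}"
  shows "kPLP k nb z y N m m = (\<Sum>n\<in>nb N m. Lam y z N n) / real (k N)"
proof -
  have "(\<Sum>n\<in>{1..N}. Psi k nb N m n * Lam y z N n * Psi k nb N m n)
      = (\<Sum>n\<in>{1..N}. if n \<in> nb N m then Lam y z N n / (real (k N))\<^sup>2 else 0)"
    by (rule sum.cong) (auto simp: Psi_def power2_eq_square)
  also have "\<dots> = (\<Sum>n\<in>nb N m. Lam y z N n / (real (k N))\<^sup>2)"
    using assms by (simp add: sum.If_cases Int_absorb1)
  also have "\<dots> = (\<Sum>n\<in>nb N m. Lam y z N n) / (real (k N))\<^sup>2"
    by (simp add: sum_divide_distrib)
  finally show ?thesis unfolding kPLP_def by (simp add: power2_eq_square)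
qed

lemma kPLP_offdiag:
  assumes "nb N m \<inter> nb N m' = {}"
  shows "kPLP k nb z y N m m' = 0"
proof -
  have z: "Psi k nb N m n * Lam y z N n * Psi k nb N m' n = 0" for n
    using assms by (auto simp: Psi_def)
  show ?thesis unfolding kPLP_def by (simp only: z sum.neutral_const mult_zero_right)
qed

lemma avg_close:
  fixes g :: "nat \<Rightarrow> real"
  assumes "finite A" "A \<noteq> {}" "\<And>n. n \<in> A \<Longrightarrow> \<bar>g n - c\<bar> \<le> e"
  shows "\<bar>(\<Sum>n\<in>A. g n) / real (card A) - c\<bar> \<le> e"
proof -
  have cp: "real (card A) > 0" using assms by (simp add: card_gt_0_iff)
  have "(\<Sum>n\<in>A. g n) / real (card A) - c = (\<Sum>n\<in>A. g n - c) / real (card A)"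
    using cp by (simp add: sum_subtractf field_simps)
  also have "\<bar>\<dots>\<bar> \<le> (\<Sum>n\<in>A. \<bar>g n - c\<bar>) / real (card A)"
    using cp by (simp add: divide_right_mono sum_abs)
  also have "\<dots> \<le> (\<Sum>n\<in>A. e) / real (card A)"
    by (intro divide_right_mono sum_mono) (use assms in auto)
  also have "\<dots> = e" using cp by simp
  finally show ?thesis .
qed

lemma PiM_UNIV_space_count: "space (Pi\<^sub>M UNIV (\<lambda>N. Pi\<^sub>M UNIV (\<lambda>m. count_space UNIV))) = UNIV"
  by (simp add: space_PiM PiE_UNIV_domain)

lemma Gs_in_family:
  fixes nb :: "nat \<Rightarrow> nat \<Rightarrow> 'w \<Rightarrow> nat set" and z :: "nat \<Rightarrow> nat \<Rightarrow> 'w \<Rightarrow> nat"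
  assumes N1: "N \<ge> 1"
  shows "{\<omega>\<in>space P. nb N m \<omega> = A \<and> (\<forall>n\<in>{1..N}. z N n \<omega> = \<zeta> n)} \<in>
    {(\<lambda>\<omega>. (\<lambda>N m. nb N m \<omega>, \<lambda>N n. z N n \<omega>)) -` F \<inter> space P | F.
           F \<in> sets (Pi\<^sub>M UNIV (\<lambda>N. Pi\<^sub>M UNIV (\<lambda>m. count_space UNIV)) \<Otimes>\<^sub>M
                      Pi\<^sub>M UNIV (\<lambda>N. Pi\<^sub>M UNIV (\<lambda>n. count_space UNIV)))}"
proof -
  let ?\<Omega> = "Pi\<^sub>M UNIV (\<lambda>N. Pi\<^sub>M UNIV (\<lambda>m. count_space UNIV)) \<Otimes>\<^sub>M
                      Pi\<^sub>M UNIV (\<lambda>N. Pi\<^sub>M UNIV (\<lambda>n. count_space (UNIV::nat set)))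
         :: ((nat \<Rightarrow> nat \<Rightarrow> nat set) \<times> (nat \<Rightarrow> nat \<Rightarrow> nat)) measure"
  define F where "F = {x \<in> space ?\<Omega>. fst x N m = A \<and> (\<forall>n\<in>{1..N}. snd x N n = \<zeta> n)}"
  let ?A1 = "Pi\<^sub>M UNIV (\<lambda>N. Pi\<^sub>M UNIV (\<lambda>m. count_space UNIV)) :: (nat \<Rightarrow> nat \<Rightarrow> nat set) measure"
  let ?A2 = "Pi\<^sub>M UNIV (\<lambda>N. Pi\<^sub>M UNIV (\<lambda>m. count_space UNIV)) :: (nat \<Rightarrow> nat \<Rightarrow> nat) measure"
  have f1: "fst \<in> measurable ?\<Omega> ?A1" by simp
  have g1: "snd \<in> measurable ?\<Omega> ?A2" by simp
  have f2: "(\<lambda>g. g N) \<in> measurable ?A1 (Pi\<^sub>M UNIV (\<lambda>m. count_space UNIV))"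
    by (rule measurable_component_singleton) simp
  have g2: "(\<lambda>g. g N) \<in> measurable ?A2 (Pi\<^sub>M UNIV (\<lambda>m. count_space UNIV))"
    by (rule measurable_component_singleton) simp
  have f3: "(\<lambda>g. g m) \<in> measurable (Pi\<^sub>M UNIV (\<lambda>m. count_space UNIV)) (count_space (UNIV :: nat set set))"
    by (rule measurable_component_singleton[where M="\<lambda>_. count_space UNIV", simplified]) simp
  have g3: "(\<lambda>g. g n) \<in> measurable (Pi\<^sub>M UNIV (\<lambda>m. count_space UNIV)) (count_space (UNIV :: nat set))" for n
    by (rule measurable_component_singleton[where M="\<lambda>_. count_space UNIV", simplified]) simp
  have m1: "(\<lambda>x. fst x N m) \<in> measurable ?\<Omega> (count_space UNIV)"
    using measurable_compose[OF measurable_compose[OF f1 f2] f3] .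
  have m2: "(\<lambda>x. snd x N n) \<in> measurable ?\<Omega> (count_space UNIV)" for n
    using measurable_compose[OF measurable_compose[OF g1 g2] g3] .
  have "F \<in> sets ?\<Omega>"
  proof -
    have "F = ((\<lambda>x. fst x N m) -` {A} \<inter> space ?\<Omega>) \<inter> (\<Inter>n\<in>{1..N}. (\<lambda>x. snd x N n) -` {\<zeta> n} \<inter> space ?\<Omega>)
      \<inter> space ?\<Omega>"
      by (auto simp: F_def)
    also have "\<dots> \<in> sets ?\<Omega>"
    proof -
      have s1: "(\<lambda>x. fst x N m) -` {A} \<inter> space ?\<Omega> \<in> sets ?\<Omega>" by (rule measurable_sets[OF m1]) simp
      have s2: "(\<lambda>x. snd x N n) -` {\<zeta> n} \<inter> space ?\<Omega> \<in> sets ?\<Omega>" for n by (rule measurable_sets[OF m2]) simp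
      have s3: "(\<Inter>n\<in>{1..N}. (\<lambda>x. snd x N n) -` {\<zeta> n} \<inter> space ?\<Omega>) \<in> sets ?\<Omega>"
        by (rule sets.finite_INT) (use N1 s2 in auto)
      show ?thesis by (rule sets.Int[OF sets.Int[OF s1 s3] sets.top])
    qed
    finally show ?thesis .
  qed
  moreover have "{\<omega>\<in>space P. nb N m \<omega> = A \<and> (\<forall>n\<in>{1..N}. z N n \<omega> = \<zeta> n)} =
      (\<lambda>\<omega>. (\<lambda>N m. nb N m \<omega>, \<lambda>N n. z N n \<omega>)) -` F \<inter> space P"
    by (auto simp: F_def space_pair_measure space_PiM PiE_UNIV_domain)
  ultimately show ?thesis by blast
qed

context ctx begin

lemma Bs_in_family:
  fixes A :: "nat set" and \<zeta> :: "nat \<Rightarrow> nat" and c \<epsilon> :: real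
  assumes fA: "finite A" and A1: "\<And>n. n \<in> A \<Longrightarrow> n \<ge> 1 \<and> \<zeta> n \<ge> 1"
  shows "{\<omega>\<in>space P. \<epsilon> < \<bar>(\<Sum>n\<in>A. Wf n (\<zeta> n) \<omega>) / real (card A) - c\<bar>} \<in>
     {(\<lambda>\<omega>. \<lambda>i\<in>II. XX i \<omega>) -` E \<inter> space P | E. E \<in> sets (Pi\<^sub>M II (\<lambda>_. borel))}"
proof -
  define h where "h x = (\<Sum>n\<in>A. (x (Inl n) - x (Inl (\<zeta> n)))\<^sup>2 / 2) / real (card A) - c" for x :: "nat + nat \<Rightarrow> real"
  have comp: "(\<lambda>x. x (Inl n)) \<in> borel_measurable (Pi\<^sub>M II (\<lambda>_. borel))" if "n \<ge> 1" for n
    by (rule measurable_component_singleton) (use that in auto)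
  have hm: "h \<in> borel_measurable (Pi\<^sub>M II (\<lambda>_. borel))"
    unfolding h_def
    by (intro borel_measurable_diff borel_measurable_divide borel_measurable_sum borel_measurable_power
        borel_measurable_const) (use comp A1 in auto)
  define E where "E = {x \<in> space (Pi\<^sub>M II (\<lambda>_. borel)). \<epsilon> < \<bar>h x\<bar>}"
  have "E \<in> sets (Pi\<^sub>M II (\<lambda>_. borel))" unfolding E_def using hm by measurable
  moreover have "{\<omega>\<in>space P. \<epsilon> < \<bar>(\<Sum>n\<in>A. Wf n (\<zeta> n) \<omega>) / real (card A) - c\<bar>} =
      (\<lambda>\<omega>. \<lambda>i\<in>II. XX i \<omega>) -` E \<inter> space P"
  proof -
    have "h (\<lambda>i\<in>II. XX i \<omega>) = (\<Sum>n\<in>A. Wf n (\<zeta> n) \<omega>) / real (card A) - c" for \<omega>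
      unfolding h_def Wf_def using A1 by (intro arg_cong2[where f="(-)"] arg_cong2[where f="(/)"] sum.cong) auto
    thus ?thesis by (auto simp: E_def space_PiM)
  qed
  ultimately show ?thesis by blast
qed

end

lemma bias_aux:
  fixes a b c d e :: real
  assumes "\<bar>a - c\<bar> < e / 4" "\<bar>b - c\<bar> < e / 4" "0 \<le> d" "d \<le> e / 2"
  shows "\<bar>(a + b + d) / 2 - c\<bar> \<le> e / 2"
proof -
  have e: "(a + b + d) / 2 - c = ((a - c) + (b - c) + d) / 2" by (simp add: field_simps)
  have "a - c < e / 4" "c - a < e / 4" "b - c < e / 4" "c - b < e / 4"
    using assms(1,2) abs_ge_self[of "a - c"] abs_ge_minus_self[of "a - c"]
      abs_ge_self[of "b - c"] abs_ge_minus_self[of "b - c"] by linarith+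
  hence "((a - c) + (b - c) + d) / 2 \<le> e / 2" "- (((a - c) + (b - c) + d) / 2) \<le> e / 2"
    using assms(3,4) by (simp_all add: field_simps)
  thus ?thesis unfolding e abs_le_iff by linarith
qed

theorem lemmaE3:
  fixes P :: "'w measure"
    and S Sstar :: "nat \<Rightarrow> real ^ 'd"
    and M :: nat
    and Y Ys :: "nat \<Rightarrow> 'w \<Rightarrow> real"
    and f rho2 alpha4 :: "real ^ 'd \<Rightarrow> real"
    and L BY C :: real
    and a :: "nat \<Rightarrow> real"
    and k :: "nat \<Rightarrow> nat"
    and nb :: "nat \<Rightarrow> nat \<Rightarrow> 'w \<Rightarrow> nat set"
    and z :: "nat \<Rightarrow> nat \<Rightarrow> 'w \<Rightarrow> nat"
  assumes P: "prob_space P"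
    and dist_targets: "inj_on Sstar {1..M}"
    and dist_train: "inj_on S {1..}"
    and infill: "\<And>m U. m \<in> {1..M} \<Longrightarrow> open U \<Longrightarrow> Sstar m \<in> U \<Longrightarrow> infinite {n. n \<ge> 1 \<and> S n \<in> U}"
    (* (A2) *)
    and rvY: "\<And>n. n \<ge> 1 \<Longrightarrow> Y n \<in> borel_measurable P"
    and rvYs: "\<And>m. m \<in> {1..M} \<Longrightarrow> Ys m \<in> borel_measurable P"
    and intY: "\<And>n. n \<ge> 1 \<Longrightarrow> integrable P (Y n) \<and> integrable P (\<lambda>\<omega>. (Y n \<omega>)\<^sup>2)
                   \<and> integrable P (\<lambda>\<omega>. (Y n \<omega> - f (S n)) ^ 4)"
    and intYs: "\<And>m. m \<in> {1..M} \<Longrightarrow> integrable P (Ys m) \<and> integrable P (\<lambda>\<omega>. (Ys m \<omega>)\<^sup>2)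
                   \<and> integrable P (\<lambda>\<omega>. (Ys m \<omega> - f (Sstar m)) ^ 4)"
    and meanY: "\<And>n. n \<ge> 1 \<Longrightarrow> prob_space.expectation P (Y n) = f (S n)"
    and meanYs: "\<And>m. m \<in> {1..M} \<Longrightarrow> prob_space.expectation P (Ys m) = f (Sstar m)"
    and indep: "prob_space.indep_vars P (\<lambda>_. borel) (case_sum Y Ys) (Inl ` {1..} \<union> Inr ` {1..M})"
    (* (A3) *)
    and A3: "L-lipschitz_on UNIV f"
    (* (A4) *)
    and rho_range: "\<And>s. 0 \<le> rho2 s \<and> rho2 s \<le> BY"
    and varY: "\<And>n. n \<ge> 1 \<Longrightarrow> prob_space.variance P (Y n) = rho2 (S n)"
    and varYs: "\<And>m. m \<in> {1..M} \<Longrightarrow> prob_space.variance P (Ys m) = rho2 (Sstar m)"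
    (* (A5) *)
    and A5: "continuous_on UNIV rho2"
    (* (A6) *)
    and alpha_range: "\<And>s. 0 \<le> alpha4 s \<and> alpha4 s \<le> C"
    and m4Y: "\<And>n. n \<ge> 1 \<Longrightarrow> prob_space.expectation P (\<lambda>\<omega>. (Y n \<omega> - f (S n)) ^ 4) = alpha4 (S n)"
    and m4Ys: "\<And>m. m \<in> {1..M} \<Longrightarrow> prob_space.expectation P (\<lambda>\<omega>. (Ys m \<omega> - f (Sstar m)) ^ 4) = alpha4 (Sstar m)"
    (* adaptive number of neighbours *)
    and a_pos: "\<And>t. t \<ge> 1 \<Longrightarrow> a t > 0"
    and a_lim: "a \<longlonglongrightarrow> 0"
    and k1: "k 1 = 1"
    and kstep: "\<And>N. N \<ge> 1 \<Longrightarrow> k (Suc N) =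
        (if Rdist S Sstar M (Suc N) (k N + 1) \<le> a (k N) then k N + 1 else k N)"
    (* nearest-neighbour sets, ties broken uniformly at random *)
    and nb_meas: "\<And>N m. nb N m \<in> measurable P (count_space UNIV)"
    and nb_valid: "\<And>N m \<omega>. N \<ge> 1 \<Longrightarrow> m \<in> {1..M} \<Longrightarrow> \<omega> \<in> space P \<Longrightarrow>
        nb N m \<omega> \<in> knn_sets S (Sstar m) N (k N)"
    and nb_unif: "\<And>N m A. N \<ge> 1 \<Longrightarrow> m \<in> {1..M} \<Longrightarrow> A \<in> knn_sets S (Sstar m) N (k N) \<Longrightarrow>
        measure P {\<omega> \<in> space P. nb N m \<omega> = A} = 1 / real (card (knn_sets S (Sstar m) N (k N)))"
    (* zeta^N(n): a nearest neighbour of S n among the other training points *)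
    and z_meas: "\<And>N n. z N n \<in> measurable P (count_space UNIV)"
    and z_valid: "\<And>N n \<omega>. N \<ge> 2 \<Longrightarrow> n \<in> {1..N} \<Longrightarrow> \<omega> \<in> space P \<Longrightarrow> z N n \<omega> \<in> nn_idx S N n"
    (* tie-breaking is independent of the responses *)
    and tie_indep: "prob_space.indep_set P
        {(\<lambda>\<omega>. \<lambda>i\<in>Inl ` {1..} \<union> Inr ` {1..M}. case_sum Y Ys i \<omega>) -` E \<inter> space P | E.
           E \<in> sets (Pi\<^sub>M (Inl ` {1..} \<union> Inr ` {1..M}) (\<lambda>_. borel))}
        {(\<lambda>\<omega>. (\<lambda>N m. nb N m \<omega>, \<lambda>N n. z N n \<omega>)) -` F \<inter> space P | F.
           F \<in> sets (Pi\<^sub>M UNIV (\<lambda>N. Pi\<^sub>M UNIV (\<lambda>m. count_space UNIV)) \<Otimes>\<^sub>M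
                      Pi\<^sub>M UNIV (\<lambda>N. Pi\<^sub>M UNIV (\<lambda>n. count_space UNIV)))}"
  shows "\<And>m m' \<epsilon>. m \<in> {1..M} \<Longrightarrow> m' \<in> {1..M} \<Longrightarrow> \<epsilon> > 0 \<Longrightarrow>
      (\<lambda>N. measure P {\<omega> \<in> space P.
          \<bar>kPLP k (\<lambda>N m. nb N m \<omega>) (\<lambda>N n. z N n \<omega>) (\<lambda>n. Y n \<omega>) N m m'
           - (if m = m' then prob_space.variance P (Ys m) else 0)\<bar> > \<epsilon>})
      \<longlonglongrightarrow> 0"
proof -
  interpret prob_space P by (rule P)
  interpret ctx P S Y Ys M f rho2 alpha4 L C
    by unfold_locales (use rvY intY meanY indep varY alpha_range m4Y in auto)
  fix m m' :: nat and \<epsilon> :: real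
  assume m: "m \<in> {1..M}" and m': "m' \<in> {1..M}" and eps: "\<epsilon> > 0"
  have M1: "1 \<le> M" using m by auto
  have close: "\<And>\<eta>. \<eta> > 0 \<Longrightarrow> eventually (\<lambda>N. \<forall>m\<in>{1..M}. \<forall>A\<in>knn_sets S (Sstar m) N (k N). \<forall>n\<in>A. dist (Sstar m) (S n) \<le> \<eta>) sequentially"
    apply (rule knn_k_close[where S=S and Sstar=Sstar and M=M and a=a and k=k])
    using M1 apply -
    apply (simp add: M1)
    apply (rule infill; assumption)
    apply (rule a_pos; assumption)
    apply (rule a_lim)
    apply (rule k1) apply (rule kstep; assumption) apply assumption done
  have kev: "\<And>T. eventually (\<lambda>N. k N \<ge> T) sequentially"
    apply (rule k_eventually[where S=S and Sstar=Sstar and M=M and a=a and k=k])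
    using M1 apply -
    apply (simp add: M1)
    apply (rule infill; assumption)
    apply (rule a_pos; assumption)
    apply (rule a_lim)
    apply (rule k1) apply (rule kstep; assumption) done
  define E where "E N = {\<omega> \<in> space P.
          \<bar>kPLP k (\<lambda>N m. nb N m \<omega>) (\<lambda>N n. z N n \<omega>) (\<lambda>n. Y n \<omega>) N m m'
           - (if m = m' then variance (Ys m) else 0)\<bar> > \<epsilon>}" for N
  have main: "(\<lambda>N. prob (E N)) \<longlonglongrightarrow> 0"
  proof (cases "m = m'")
    case False
    define \<eta> where "\<eta> = dist (Sstar m) (Sstar m') / 3"
    have "Sstar m \<noteq> Sstar m'" using dist_targets m m' False by (auto dest: inj_onD)
    hence \<eta>pos: "\<eta> > 0" by (simp add: \<eta>_def)
    have "eventually (\<lambda>N. prob (E N) = 0) sequentially"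
      using eventually_conj[OF close[OF \<eta>pos] eventually_ge_at_top[of 1]]
    proof eventually_elim
      case (elim N)
      have "E N = {}"
      proof (rule equals0I)
        fix \<omega> assume \<omega>E: "\<omega> \<in> E N"
        hence \<omega>: "\<omega> \<in> space P" by (simp add: E_def)
        have A: "nb N m \<omega> \<in> knn_sets S (Sstar m) N (k N)" using nb_valid elim m \<omega> by auto
        have A': "nb N m' \<omega> \<in> knn_sets S (Sstar m') N (k N)" using nb_valid elim m' \<omega> by auto
        have "nb N m \<omega> \<inter> nb N m' \<omega> = {}"
        proof (rule equals0I)
          fix n assume n: "n \<in> nb N m \<omega> \<inter> nb N m' \<omega>"
          have "dist (Sstar m) (S n) \<le> \<eta>" using elim m A n by blast
          moreover have "dist (Sstar m') (S n) \<le> \<eta>" using elim m' A' n by blast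
          moreover have "dist (Sstar m) (Sstar m') \<le> dist (Sstar m) (S n) + dist (Sstar m') (S n)"
            by (rule dist_triangle2)
          ultimately show False using \<eta>pos unfolding \<eta>_def by linarith
        qed
        hence "kPLP k (\<lambda>N m. nb N m \<omega>) (\<lambda>N n. z N n \<omega>) (\<lambda>n. Y n \<omega>) N m m' = 0"
          by (intro kPLP_offdiag) simp
        thus False using \<omega>E False eps by (simp add: E_def)
      qed
      thus ?case by simp
    qed
    thus ?thesis by (rule tendsto_eventually)
  next
    case True
    hence mm: "m' = m" by simp
    define c where "c = rho2 (Sstar m)"
    have varc: "variance (Ys m) = c" using varYs m by (simp add: c_def)
    have "\<exists>d>0. \<forall>x'\<in>UNIV. dist x' (Sstar m) < d \<longrightarrow> dist (rho2 x') (rho2 (Sstar m)) < \<epsilon> / 4"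
    proof -
      have "\<forall>x\<in>UNIV. \<forall>e>0. \<exists>d>0. \<forall>x'\<in>UNIV. dist x' x < d \<longrightarrow> dist (rho2 x') (rho2 x) < e"
        using A5 unfolding continuous_on_iff .
      moreover have "\<epsilon> / 4 > 0" using eps by simp
      ultimately show ?thesis by blast
    qed
    then obtain \<eta>1 where \<eta>1: "\<eta>1 > 0" and cont: "\<And>s. dist s (Sstar m) < \<eta>1 \<Longrightarrow> \<bar>rho2 s - c\<bar> < \<epsilon> / 4"
      by (auto simp: dist_real_def c_def)
    have L0: "L \<ge> 0" using A3 by (rule lipschitz_on_nonneg)
    have C0: "C \<ge> 0" using alpha_range[of undefined] by linarith
    define \<eta>0 where "\<eta>0 = min 1 (min (\<eta>1 / 4) (sqrt (\<epsilon> / 2) / (2 * L + 1)))"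
    have \<eta>0pos: "\<eta>0 > 0" using \<eta>1 eps L0 by (simp add: \<eta>0_def)
    have \<eta>0le1: "\<eta>0 \<le> 1" by (simp add: \<eta>0_def)
    have \<eta>0le: "3 * \<eta>0 < \<eta>1" using \<eta>1 by (simp add: \<eta>0_def)
    have \<eta>0L: "(2 * L * \<eta>0)\<^sup>2 \<le> \<epsilon> / 2"
    proof -
      have "2 * L * \<eta>0 \<le> (2 * L + 1) * \<eta>0" using \<eta>0pos by (simp add: algebra_simps)
      also have "\<dots> \<le> (2 * L + 1) * (sqrt (\<epsilon> / 2) / (2 * L + 1))"
        using L0 by (intro mult_left_mono) (auto simp: \<eta>0_def)
      also have "\<dots> = sqrt (\<epsilon> / 2)" using L0 by simp
      finally have "2 * L * \<eta>0 \<le> sqrt (\<epsilon> / 2)" .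
      moreover have "0 \<le> 2 * L * \<eta>0" using L0 \<eta>0pos by simp
      ultimately have "(2 * L * \<eta>0)\<^sup>2 \<le> (sqrt (\<epsilon> / 2))\<^sup>2" by (rule power_mono)
      thus ?thesis using eps by simp
    qed
    obtain K :: nat where K: "\<And>(X :: (real ^ 'd) set) y. finite X \<Longrightarrow> y \<notin> X \<Longrightarrow>
        (\<forall>x\<in>X. \<forall>x'\<in>X. x' \<noteq> x \<longrightarrow> dist x y \<le> dist x x') \<Longrightarrow> card X \<le> K"
      using nn_indegree_bound by blast
    define B2 where "B2 = 27 / 4 * (2 * C + (2 * L) ^ 4)"
    have B2: "B2 \<ge> 0" using C0 by (simp add: B2_def)
    define \<beta> where "\<beta> = 4 * B2 * (2 + 2 * real K) / \<epsilon>\<^sup>2"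
    have \<beta>0: "\<beta> \<ge> 0" using B2 by (simp add: \<beta>_def)
    have core: "prob (E N) \<le> \<beta> / real (k N)"
      if N2: "N \<ge> 2" and k2: "k N \<ge> 2"
        and cl: "\<forall>A\<in>knn_sets S (Sstar m) N (k N). \<forall>n\<in>A. dist (Sstar m) (S n) \<le> \<eta>0" for N
    proof -
      define Adm where "Adm = Sigma (knn_sets S (Sstar m) N (k N)) (\<lambda>_. Pi\<^sub>E {1..N} (\<lambda>n. nn_idx S N n))"
      define Gs where "Gs p = {\<omega>\<in>space P. nb N m \<omega> = fst p \<and> (\<forall>n\<in>{1..N}. z N n \<omega> = snd p n)}" for p :: "nat set \<times> (nat \<Rightarrow> nat)"
      define Bs where "Bs p = {\<omega>\<in>space P. \<epsilon> < \<bar>(\<Sum>n\<in>fst p. Wf n (snd p n) \<omega>) / real (card (fst p)) - c\<bar>}" for p :: "nat set \<times> (nat \<Rightarrow> nat)"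
      have nn_sub: "nn_idx S N n \<subseteq> {1..N}" for n by (auto simp: nn_idx_def)
      have finAdm: "finite Adm" unfolding Adm_def
        by (intro finite_SigmaI knn_sets_finite finite_PiE) (use nn_sub in \<open>auto intro: finite_subset\<close>)
      have Gfam: "Gs p \<in> {(\<lambda>\<omega>. (\<lambda>N m. nb N m \<omega>, \<lambda>N n. z N n \<omega>)) -` F \<inter> space P | F.
           F \<in> sets (Pi\<^sub>M UNIV (\<lambda>N. Pi\<^sub>M UNIV (\<lambda>m. count_space UNIV)) \<Otimes>\<^sub>M
                      Pi\<^sub>M UNIV (\<lambda>N. Pi\<^sub>M UNIV (\<lambda>n. count_space UNIV)))}" for p
        unfolding Gs_def by (rule Gs_in_family) (use N2 in auto)
      have Bfam: "Bs p \<in> {(\<lambda>\<omega>. \<lambda>i\<in>Inl ` {1..} \<union> Inr ` {1..M}. case_sum Y Ys i \<omega>) -` E \<inter> space P | E.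
           E \<in> sets (Pi\<^sub>M (Inl ` {1..} \<union> Inr ` {1..M}) (\<lambda>_. borel))}" if "p \<in> Adm" for p
      proof -
        have "fst p \<in> knn_sets S (Sstar m) N (k N)" using that by (auto simp: Adm_def)
        hence "fst p \<subseteq> {1..N}" by (rule knn_sets_sub)
        moreover have "snd p n \<in> {1..N}" if "n \<in> {1..N}" for n
        proof -
          have "snd p n \<in> nn_idx S N n" using \<open>p \<in> Adm\<close> that by (auto simp: Adm_def PiE_iff)
          thus ?thesis using nn_sub by blast
        qed
        ultimately show ?thesis unfolding Bs_def
          by (intro Bs_in_family) (auto intro: finite_subset)
      qed
      have Gev: "Gs p \<in> events" for p using indep_setD_ev2[OF tie_indep] Gfam by blast
      have Bev: "Bs p \<in> events" if "p \<in> Adm" for p using indep_setD_ev1[OF tie_indep] Bfam[OF that] by blast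
      have ind: "prob (Bs p \<inter> Gs p) = prob (Bs p) * prob (Gs p)" if "p \<in> Adm" for p
        by (rule indep_setD[OF tie_indep Bfam[OF that] Gfam])
      have Bbound: "prob (Bs p) \<le> \<beta> / real (k N)" if p: "p \<in> Adm" for p
      proof -
        define A where "A = fst p"
        define \<zeta> where "\<zeta> = snd p"
        have A: "A \<in> knn_sets S (Sstar m) N (k N)" using p by (auto simp: Adm_def A_def)
        have Asub: "A \<subseteq> {1..N}" using A by (rule knn_sets_sub)
        have cA: "card A = k N" using A by (rule knn_sets_card)
        have fA: "finite A" using Asub by (auto intro: finite_subset)
        have \<zeta>nn: "\<zeta> n \<in> nn_idx S N n" if "n \<in> A" for n
          using p that Asub by (auto simp: Adm_def \<zeta>_def PiE_iff)
        have \<zeta>1: "\<zeta> n \<ge> 1 \<and> \<zeta> n \<noteq> n \<and> \<zeta> n \<le> N" if "n \<in> A" for n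
          using \<zeta>nn[OF that] by (auto simp: nn_idx_def)
        have \<zeta>min: "dist (S n) (S (\<zeta> n)) \<le> dist (S n) (S n')" if "n \<in> A" "n' \<in> {1..N}" "n' \<noteq> n" for n n'
          using \<zeta>nn[OF that(1)] that by (auto simp: nn_idx_def)
        have A1: "n \<ge> 1" if "n \<in> A" for n using Asub that by auto
        have injS: "inj_on S A" by (rule inj_on_subset[OF dist_train]) (use Asub in auto)
        have deg: "card {n\<in>A. \<zeta> n = x} \<le> K" for x
        proof (cases "{n\<in>A. \<zeta> n = x} = {}")
          case True thus ?thesis by (simp only: card.empty zero_le)
        next
          case False
          then obtain n0 where n0: "n0 \<in> A" "\<zeta> n0 = x" by auto
          have x1: "x \<ge> 1" using \<zeta>1[OF n0(1)] n0 by auto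
          have "card (S ` {n\<in>A. \<zeta> n = x}) \<le> K"
          proof (rule K)
            show "finite (S ` {n\<in>A. \<zeta> n = x})" using fA by simp
            show "S x \<notin> S ` {n\<in>A. \<zeta> n = x}"
            proof
              assume "S x \<in> S ` {n\<in>A. \<zeta> n = x}"
              then obtain n where n: "n \<in> A" "\<zeta> n = x" "S x = S n" by auto
              have "x = n" using inj_onD[OF dist_train n(3)] x1 A1[OF n(1)] by auto
              thus False using \<zeta>1[OF n(1)] n(2) by simp
            qed
            show "\<forall>u\<in>S ` {n\<in>A. \<zeta> n = x}. \<forall>u'\<in>S ` {n\<in>A. \<zeta> n = x}. u' \<noteq> u \<longrightarrow> dist u (S x) \<le> dist u u'"
            proof (intro ballI impI)
              fix u u' assume u: "u \<in> S ` {n\<in>A. \<zeta> n = x}" and u': "u' \<in> S ` {n\<in>A. \<zeta> n = x}" and uu: "u' \<noteq> u"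
              obtain n where n: "n \<in> A" "\<zeta> n = x" "u = S n" using u by auto
              obtain n' where n': "n' \<in> A" "u' = S n'" using u' by auto
              have "n' \<noteq> n" using uu n n' by auto
              thus "dist u (S x) \<le> dist u u'" using \<zeta>min[OF n(1), of n'] n n' Asub by auto
            qed
          qed
          moreover have "card (S ` {n\<in>A. \<zeta> n = x}) = card {n\<in>A. \<zeta> n = x}"
            by (rule card_image) (rule inj_on_subset[OF injS], auto)
          ultimately show ?thesis by simp
        qed
        have termclose: "dist (Sstar m) (S n) \<le> \<eta>0 \<and> dist (S n) (S (\<zeta> n)) \<le> 2 * \<eta>0" if n: "n \<in> A" for n
        proof -
          have d1: "dist (Sstar m) (S n) \<le> \<eta>0" using cl A n by blast
          have "card (A - {n}) \<ge> 1" using cA k2 n fA by (simp add: card_Diff_singleton)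
          hence "A - {n} \<noteq> {}" by (metis card.empty not_one_le_zero)
          then obtain n'' where n'': "n'' \<in> A" "n'' \<noteq> n" by blast
          have "dist (S n) (S (\<zeta> n)) \<le> dist (S n) (S n'')" using \<zeta>min[OF n, of n''] n'' Asub by auto
          also have "\<dots> \<le> dist (Sstar m) (S n) + dist (Sstar m) (S n'')" by (rule dist_triangle3)
          also have "\<dots> \<le> 2 * \<eta>0" using d1 cl A n'' by force
          finally show ?thesis using d1 by simp
        qed
        have Delta: "\<bar>f (S n) - f (S (\<zeta> n))\<bar> \<le> 2 * L * \<eta>0" if n: "n \<in> A" for n
        proof -
          have "dist (f (S n)) (f (S (\<zeta> n))) \<le> L * dist (S n) (S (\<zeta> n))"
            by (rule lipschitz_onD[OF A3]) auto
          also have "\<dots> \<le> L * (2 * \<eta>0)" using termclose[OF n] L0 by (intro mult_left_mono) auto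
          finally show ?thesis by (simp add: dist_real_def)
        qed
        have bias: "\<bar>(\<Sum>n\<in>A. expectation (Wf n (\<zeta> n))) / real (card A) - c\<bar> \<le> \<epsilon> / 2"
        proof (rule avg_close[OF fA])
          show "A \<noteq> {}" using cA k2 by auto
          fix n assume n: "n \<in> A"
          have em: "expectation (Wf n (\<zeta> n)) = (rho2 (S n) + rho2 (S (\<zeta> n)) + (f (S n) - f (S (\<zeta> n)))\<^sup>2) / 2"
            by (rule Wf_mean) (use A1[OF n] \<zeta>1[OF n] in auto)
          have r1: "\<bar>rho2 (S n) - c\<bar> < \<epsilon> / 4"
            by (rule cont) (use termclose[OF n] \<eta>0le \<eta>0pos in \<open>auto simp: dist_commute\<close>)
          have "dist (S (\<zeta> n)) (Sstar m) \<le> dist (S (\<zeta> n)) (S n) + dist (S n) (Sstar m)" by (rule dist_triangle)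
          also have "\<dots> \<le> 3 * \<eta>0" using termclose[OF n] by (simp add: dist_commute)
          finally have r2: "\<bar>rho2 (S (\<zeta> n)) - c\<bar> < \<epsilon> / 4" using \<eta>0le by (intro cont) simp
          have "(f (S n) - f (S (\<zeta> n)))\<^sup>2 \<le> (2 * L * \<eta>0)\<^sup>2"
            using Delta[OF n] by (simp add: abs_le_square_iff[symmetric] abs_of_nonneg L0 \<eta>0pos less_imp_le)
          hence r3: "(f (S n) - f (S (\<zeta> n)))\<^sup>2 \<le> \<epsilon> / 2" using \<eta>0L by simp
          have r4: "0 \<le> (f (S n) - f (S (\<zeta> n)))\<^sup>2" by simp
          show "\<bar>expectation (Wf n (\<zeta> n)) - c\<bar> \<le> \<epsilon> / 2" unfolding em by (rule bias_aux[OF r1 r2 r4 r3])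
        qed
        have m2: "expectation (\<lambda>\<omega>. (Wf n (\<zeta> n) \<omega>)\<^sup>2) \<le> B2" if n: "n \<in> A" for n
        proof -
          have "expectation (\<lambda>\<omega>. (Wf n (\<zeta> n) \<omega>)\<^sup>2) \<le> 27 / 4 * (2 * C + (f (S n) - f (S (\<zeta> n))) ^ 4)"
            by (rule Wf_sq_int(2)) (use A1[OF n] \<zeta>1[OF n] in auto)
          also have "\<dots> \<le> B2"
          proof -
            have "\<bar>f (S n) - f (S (\<zeta> n))\<bar> \<le> 2 * L" using Delta[OF n] \<eta>0le1 L0
              by (smt (verit) mult_left_mono mult_right_le_one_le \<eta>0pos)
            hence "\<bar>f (S n) - f (S (\<zeta> n))\<bar> ^ 4 \<le> (2 * L) ^ 4" by (rule power_mono) simp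
            hence "(f (S n) - f (S (\<zeta> n))) ^ 4 \<le> (2 * L) ^ 4" by (simp add: power_even_abs)
            thus ?thesis by (simp add: B2_def)
          qed
          finally show ?thesis .
        qed
        have "prob (Bs p) = prob {\<omega> \<in> space P. \<bar>(\<Sum>n\<in>A. Wf n (\<zeta> n) \<omega>) / real (card A) - c\<bar> > \<epsilon>}"
          by (simp add: Bs_def A_def \<zeta>_def)
        also have "\<dots> \<le> 4 * B2 * (2 + 2 * real K) / (\<epsilon>\<^sup>2 * real (card A))"
          by (rule cheb_block[OF fA _ _ deg _ eps bias m2 B2]) (use A1 \<zeta>1 cA k2 in auto)
        also have "\<dots> = \<beta> / real (k N)" using cA by (simp add: \<beta>_def)
        finally show ?thesis .
      qed
      have disj: "disjoint_family_on Gs Adm"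
        unfolding disjoint_family_on_def
      proof (intro ballI impI)
        fix p q assume p: "p \<in> Adm" and q: "q \<in> Adm" and pq: "p \<noteq> q"
        show "Gs p \<inter> Gs q = {}"
        proof (rule equals0I)
          fix \<omega> assume "\<omega> \<in> Gs p \<inter> Gs q"
          hence e1: "fst p = fst q" and e2: "\<And>n. n \<in> {1..N} \<Longrightarrow> snd p n = snd q n" by (auto simp: Gs_def)
          have "snd p = snd q"
          proof (rule PiE_ext[of "snd p" "{1..N}" "\<lambda>n. nn_idx S N n"])
            show "snd p \<in> Pi\<^sub>E {1..N} (\<lambda>n. nn_idx S N n)" using p by (auto simp: Adm_def)
            show "snd q \<in> Pi\<^sub>E {1..N} (\<lambda>n. nn_idx S N n)" using q by (auto simp: Adm_def)
          qed (rule e2)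
          thus False using e1 pq by (simp add: prod_eq_iff)
        qed
      qed
      have sub: "E N \<subseteq> (\<Union>p\<in>Adm. Bs p \<inter> Gs p)"
      proof
        fix \<omega> assume \<omega>E: "\<omega> \<in> E N"
        hence \<omega>: "\<omega> \<in> space P" by (simp add: E_def)
        define p where "p = (nb N m \<omega>, restrict (\<lambda>n. z N n \<omega>) {1..N})"
        have A: "nb N m \<omega> \<in> knn_sets S (Sstar m) N (k N)" using nb_valid N2 m \<omega> by auto
        have Asub: "nb N m \<omega> \<subseteq> {1..N}" using A by (rule knn_sets_sub)
        have pA: "p \<in> Adm" unfolding p_def Adm_def using A z_valid N2 \<omega> by auto
        have "\<omega> \<in> Gs p" using \<omega> by (simp add: Gs_def p_def)
        moreover have "\<omega> \<in> Bs p"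
        proof -
          have "kPLP k (\<lambda>N m. nb N m \<omega>) (\<lambda>N n. z N n \<omega>) (\<lambda>n. Y n \<omega>) N m m
             = (\<Sum>n\<in>nb N m \<omega>. Lam (\<lambda>n. Y n \<omega>) (\<lambda>N n. z N n \<omega>) N n) / real (k N)"
            by (rule kPLP_diag) (use Asub in simp)
          also have "\<dots> = (\<Sum>n\<in>fst p. Wf n (snd p n) \<omega>) / real (card (fst p))"
            using Asub knn_sets_card[OF A] by (auto simp: p_def Lam_def Wf_def intro!: sum.cong)
          finally show ?thesis using \<omega>E mm varc by (simp add: E_def Bs_def)
        qed
        ultimately show "\<omega> \<in> (\<Union>p\<in>Adm. Bs p \<inter> Gs p)" using pA by blast
      qed
      have "prob (E N) \<le> prob (\<Union>p\<in>Adm. Bs p \<inter> Gs p)"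
        by (rule finite_measure_mono[OF sub]) (use finAdm Bev Gev in auto)
      also have "\<dots> \<le> (\<Sum>p\<in>Adm. prob (Bs p \<inter> Gs p))"
        by (rule finite_measure_subadditive_finite[OF finAdm]) (use Bev Gev in auto)
      also have "\<dots> = (\<Sum>p\<in>Adm. prob (Bs p) * prob (Gs p))" by (rule sum.cong) (use ind in auto)
      also have "\<dots> \<le> (\<Sum>p\<in>Adm. \<beta> / real (k N) * prob (Gs p))"
      proof (rule sum_mono)
        fix p assume "p \<in> Adm"
        thus "prob (Bs p) * prob (Gs p) \<le> \<beta> / real (k N) * prob (Gs p)"
          using Bbound by (intro mult_right_mono) auto
      qed
      also have "\<dots> = \<beta> / real (k N) * prob (\<Union>p\<in>Adm. Gs p)"
        by (subst finite_measure_finite_Union[OF finAdm _ disj]) (use Gev in \<open>auto simp: sum_distrib_left\<close>)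
      also have "\<dots> \<le> \<beta> / real (k N) * 1"
        by (rule mult_left_mono) (use \<beta>0 in auto)
      finally show ?thesis by simp
    qed
    show ?thesis
    proof (rule order_tendstoI)
      fix a :: real assume "a < 0"
      thus "eventually (\<lambda>N. a < prob (E N)) sequentially"
        by (intro always_eventually allI) (meson less_le_trans measure_nonneg)
    next
      fix a :: real assume a: "0 < a"
      define T where "T = nat \<lceil>\<beta> / a\<rceil> + 2"
      have ev: "eventually (\<lambda>N. N \<ge> 2 \<and> k N \<ge> T \<and>
          (\<forall>m\<in>{1..M}. \<forall>A\<in>knn_sets S (Sstar m) N (k N). \<forall>n\<in>A. dist (Sstar m) (S n) \<le> \<eta>0)) sequentially"
        by (intro eventually_conj eventually_ge_at_top kev close \<eta>0pos)
      show "eventually (\<lambda>N. prob (E N) < a) sequentially"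
        using ev
      proof eventually_elim
        case (elim N)
        have k2: "k N \<ge> 2" using elim by (simp add: T_def)
        have kpos: "real (k N) > 0" using k2 by simp
        have "\<beta> / a < real (k N)"
        proof -
          have "\<beta> / a \<le> real (nat \<lceil>\<beta> / a\<rceil>)" by linarith
          also have "\<dots> < real T" by (simp add: T_def)
          also have "\<dots> \<le> real (k N)" using elim by simp
          finally show ?thesis .
        qed
        hence "\<beta> < a * real (k N)" using a by (simp add: field_simps)
        hence "\<beta> / real (k N) < a" using kpos by (simp add: field_simps)
        moreover have "prob (E N) \<le> \<beta> / real (k N)"
          by (rule core) (use elim k2 m in auto)
        ultimately show ?case by simp
      qed
    qed
  qed
  thus "(\<lambda>N. measure P {\<omega> \<in> space P.
          \<bar>kPLP k (\<lambda>N m. nb N m \<omega>) (\<lambda>N n. z N n \<omega>) (\<lambda>n. Y n \<omega>) N m m'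
           - (if m = m' then prob_space.variance P (Ys m) else 0)\<bar> > \<epsilon>})
      \<longlonglongrightarrow> 0" by (simp add: E_def)
qed

end
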